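(* Let $Q$ be an induced path in a graph $G$ and let $H$ be a Tutte bridge of $V(Q)$ in $G$ such that (1) $V(H)\cap V(Q)=\{v_1,v_2\}$ for two non-adjacent vertices $v_1,v_2$ of $Q$, and (2) $H$ contains a cycle $C$ and two vertex-disjoint (possibly single-vertex) paths in $H$, one from $v_1$ to $V(C)$ and one from $v_2$ to $V(C)$. Let $Q'$ be the subpath of $Q$ from $v_1$ to $v_2$. Then $G[V(H)\cup V(Q')]$ contains an induced subdivision of the diamond.
   Context: All graphs are finite and simple. The diamond is $K_4$ minus one edge. An induced subdivision of a graph $H$ in $G$ is an induced subgraph of $G$ isomorphic to a graph obtained from $H$ by repeatedly replacing edges by paths of length $2$ through new vertices. For $A\subseteq V(G)$, a Tutte bridge of $A$ in $G$ is the subgraph of $G$ consisting of one connected component $K$ of $G-A$, together with all edges joining $K$ to $A$ and all vertices of $A$ incident with those edges. *)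

theory Defs
  imports Main
begin

definition sgraph :: "'a set \<Rightarrow> ('a \<Rightarrow> 'a \<Rightarrow> bool) \<Rightarrow> bool" where
  "sgraph V E \<longleftrightarrow> finite V \<and> (\<forall>x y. E x y \<longrightarrow> x \<in> V \<and> y \<in> V \<and> x \<noteq> y \<and> E y x)"

definition is_path :: "('a \<Rightarrow> 'a \<Rightarrow> bool) \<Rightarrow> 'a list \<Rightarrow> bool" where
  "is_path E xs \<longleftrightarrow> xs \<noteq> [] \<and> distinct xs \<and>
     (\<forall>i. Suc i < length xs \<longrightarrow> E (xs ! i) (xs ! Suc i))"

definition induced_path :: "('a \<Rightarrow> 'a \<Rightarrow> bool) \<Rightarrow> 'a list \<Rightarrow> bool" where
  "induced_path E xs \<longleftrightarrow> is_path E xs \<and>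
     (\<forall>i j. i < length xs \<longrightarrow> j < length xs \<longrightarrow> E (xs ! i) (xs ! j) \<longrightarrow> i = Suc j \<or> j = Suc i)"

definition is_cycle :: "('a \<Rightarrow> 'a \<Rightarrow> bool) \<Rightarrow> 'a list \<Rightarrow> bool" where
  "is_cycle E cs \<longleftrightarrow> 3 \<le> length cs \<and> distinct cs \<and>
     (\<forall>i. Suc i < length cs \<longrightarrow> E (cs ! i) (cs ! Suc i)) \<and> E (last cs) (hd cs)"

definition induced_adj :: "('a \<Rightarrow> 'a \<Rightarrow> bool) \<Rightarrow> 'a set \<Rightarrow> 'a \<Rightarrow> 'a \<Rightarrow> bool" where
  "induced_adj E S x y \<longleftrightarrow> E x y \<and> x \<in> S \<and> y \<in> S"

definition component :: "'a set \<Rightarrow> ('a \<Rightarrow> 'a \<Rightarrow> bool) \<Rightarrow> 'a set \<Rightarrow> bool" where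
  "component V E K \<longleftrightarrow> K \<noteq> {} \<and> K \<subseteq> V \<and>
     (\<forall>x\<in>K. \<forall>y\<in>K. (induced_adj E K)\<^sup>*\<^sup>* x y) \<and>
     (\<forall>x\<in>K. \<forall>y\<in>V. E x y \<longrightarrow> y \<in> K)"

definition tutte_bridge :: "'a set \<Rightarrow> ('a \<Rightarrow> 'a \<Rightarrow> bool) \<Rightarrow> 'a set \<Rightarrow> 'a set \<Rightarrow> ('a \<Rightarrow> 'a \<Rightarrow> bool) \<Rightarrow> bool" where
  "tutte_bridge V E A VH EH \<longleftrightarrow> (\<exists>K. component (V - A) (induced_adj E (V - A)) K \<and>
     VH = K \<union> {a \<in> A. \<exists>k\<in>K. E a k} \<and>
     EH = (\<lambda>x y. E x y \<and> (x \<in> K \<or> y \<in> K)))"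

inductive subdivision_of :: "nat set \<times> (nat \<Rightarrow> nat \<Rightarrow> bool) \<Rightarrow> nat set \<times> (nat \<Rightarrow> nat \<Rightarrow> bool) \<Rightarrow> bool"
  for H0 where
  sub_refl: "subdivision_of H0 H0"
| sub_step: "subdivision_of H0 (V, E) \<Longrightarrow> E x y \<Longrightarrow> z \<notin> V \<Longrightarrow>
     subdivision_of H0 (insert z V,
       (\<lambda>a b. (E a b \<and> {a, b} \<noteq> {x, y}) \<or> {a, b} = {x, z} \<or> {a, b} = {z, y}))"

definition diamond :: "nat set \<times> (nat \<Rightarrow> nat \<Rightarrow> bool)" where
  "diamond = ({0, 1, 2, 3},
     (\<lambda>a b. a \<in> {0, 1, 2, 3} \<and> b \<in> {0, 1, 2, 3} \<and> a \<noteq> b \<and> {a, b} \<noteq> {2, 3}))"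

definition has_induced_subdiv_diamond :: "('a \<Rightarrow> 'a \<Rightarrow> bool) \<Rightarrow> 'a set \<Rightarrow> bool" where
  "has_induced_subdiv_diamond E S \<longleftrightarrow> (\<exists>W V' E' f. W \<subseteq> S \<and>
     subdivision_of diamond (V', E') \<and> bij_betw f W V' \<and>
     (\<forall>x\<in>W. \<forall>y\<in>W. E x y \<longleftrightarrow> E' (f x) (f y)))"

end

theory Submission
  imports Defs
begin


fun wlk :: "('a \<Rightarrow> 'a \<Rightarrow> bool) \<Rightarrow> 'a list \<Rightarrow> bool" where
  "wlk E [] = True"
| "wlk E [x] = True"
| "wlk E (x # y # xs) = (E x y \<and> wlk E (y # xs))"

lemma wlk_Cons: "wlk E (x # xs) \<longleftrightarrow> (xs = [] \<or> (E x (hd xs) \<and> wlk E xs))"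
  by (cases xs) auto

lemma wlk_append[simp]:
  "wlk E (xs @ ys) \<longleftrightarrow> wlk E xs \<and> wlk E ys \<and> (xs \<noteq> [] \<longrightarrow> ys \<noteq> [] \<longrightarrow> E (last xs) (hd ys))"
  by (induction xs) (auto simp: wlk_Cons)

lemma wlk_rev:
  assumes "\<And>x y. E x y \<Longrightarrow> E y x"
  shows "wlk E (rev xs) = wlk E xs"
  by (induction xs) (auto simp: wlk_Cons last_rev intro: assms)

lemma wlk_nth: "wlk E xs \<longleftrightarrow> (\<forall>i. Suc i < length xs \<longrightarrow> E (xs ! i) (xs ! Suc i))"
proof (induction xs)
  case Nil then show ?case by simp
next
  case (Cons x xs)
  show ?case
  proof (cases xs)
    case Nil then show ?thesis by simp
  next
    case (Cons y ys)
    show ?thesis using Cons.IH unfolding Cons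
      by (auto simp: nth_Cons split: nat.splits)
  qed
qed

lemma is_path_iff: "is_path E xs \<longleftrightarrow> xs \<noteq> [] \<and> distinct xs \<and> wlk E xs"
  unfolding is_path_def wlk_nth by auto

fun ledge :: "'a list \<Rightarrow> 'a \<Rightarrow> 'a \<Rightarrow> bool" where
  "ledge [] u v = False"
| "ledge [x] u v = False"
| "ledge (x # y # xs) u v = ((u = x \<and> v = y) \<or> (u = y \<and> v = x) \<or> ledge (y # xs) u v)"

lemma ledge_Cons: "ledge (x # xs) u v \<longleftrightarrow> (xs \<noteq> [] \<and> ((u = x \<and> v = hd xs) \<or> (u = hd xs \<and> v = x))) \<or> ledge xs u v"
  by (cases xs) auto

lemma ledge_append[simp]:
  "ledge (xs @ ys) u v \<longleftrightarrow> ledge xs u v \<or> ledge ys u v \<or> (xs \<noteq> [] \<and> ys \<noteq> [] \<and> ((u = last xs \<and> v = hd ys) \<or> (u = hd ys \<and> v = last xs)))"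
  by (induction xs) (auto simp: ledge_Cons)


lemma ledge_sym: "ledge xs u v = ledge xs v u"
  by (induction xs) (auto simp: ledge_Cons)

lemma ledge_rev[simp]: "ledge (rev xs) u v = ledge xs u v"
  by (induction xs) (auto simp: ledge_Cons hd_rev last_rev)

lemma ledge_set: "ledge xs u v \<Longrightarrow> u \<in> set xs \<and> v \<in> set xs"
  by (induction xs) (auto simp: ledge_Cons)

lemma wlk_ledge: "wlk E xs \<Longrightarrow> ledge xs u v \<Longrightarrow> E u v \<or> E v u"
  by (induction xs) (auto simp: ledge_Cons wlk_Cons)

definition glue :: "'a list \<Rightarrow> 'a list \<Rightarrow> 'a list" where "glue xs ys = xs @ tl ys"

lemma glue_simps:
  assumes "xs \<noteq> []" "ys \<noteq> []" "last xs = hd ys"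
  shows "set (glue xs ys) = set xs \<union> set ys" "length (glue xs ys) = length xs + length ys - 1"
    "hd (glue xs ys) = hd xs" "last (glue xs ys) = last ys" "glue xs ys \<noteq> []"
  using assms unfolding glue_def by (cases ys; auto)+

lemma glue_distinct:
  assumes "xs \<noteq> []" "ys \<noteq> []" "last xs = hd ys" "distinct xs" "distinct ys" "set xs \<inter> set ys \<subseteq> {hd ys}"
  shows "distinct (glue xs ys)"
  using assms unfolding glue_def by (cases ys) auto

lemma glue_wlk:
  assumes "xs \<noteq> []" "ys \<noteq> []" "last xs = hd ys" "wlk E xs" "wlk E ys"
  shows "wlk E (glue xs ys)"
  using assms unfolding glue_def by (cases ys) (auto simp: wlk_Cons)


definition isub :: "'a set \<Rightarrow> ('a \<Rightarrow> 'a \<Rightarrow> bool) \<Rightarrow> bool" where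
 "isub W F \<longleftrightarrow> (\<exists>V' E' f. subdivision_of diamond (V', E') \<and> bij_betw f W V' \<and>
     (\<forall>x\<in>W. \<forall>y\<in>W. F x y \<longleftrightarrow> E' (f x) (f y)))"

lemma has_diamond_of_isub:
  assumes "W \<subseteq> S" "isub W F" "\<forall>x\<in>W. \<forall>y\<in>W. F x y \<longleftrightarrow> E x y"
  shows "has_induced_subdiv_diamond E S"
  using assms unfolding isub_def has_induced_subdiv_diamond_def by metis

lemma subdiv_props:
  assumes "subdivision_of H0 G" "finite (fst H0)" "\<forall>a b. snd H0 a b \<longrightarrow> a \<in> fst H0 \<and> b \<in> fst H0"
  shows "finite (fst G) \<and> (\<forall>a b. snd G a b \<longrightarrow> a \<in> fst G \<and> b \<in> fst G)"
  using assms by (induction rule: subdivision_of.induct) (auto simp: doubleton_eq_iff)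

lemma diamond_props: "finite (fst diamond)" "\<forall>a b. snd diamond a b \<longrightarrow> a \<in> fst diamond \<and> b \<in> fst diamond"
  unfolding diamond_def by auto

lemma sub_ext:
  assumes "isub W F" "x \<in> W" "y \<in> W" "F x y" "z \<notin> W"
    and F': "\<forall>u\<in>insert z W. \<forall>v\<in>insert z W. F' u v \<longleftrightarrow>
       ((u \<in> W \<and> v \<in> W \<and> F u v \<and> \<not>((u = x \<and> v = y) \<or> (u = y \<and> v = x)))
        \<or> (u = x \<and> v = z) \<or> (u = z \<and> v = x) \<or> (u = z \<and> v = y) \<or> (u = y \<and> v = z))"
  shows "isub (insert z W) F'"
proof -
  obtain V' E' f where sd: "subdivision_of diamond (V', E')" and bij: "bij_betw f W V'"
    and iso: "\<forall>x\<in>W. \<forall>y\<in>W. F x y \<longleftrightarrow> E' (f x) (f y)"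
    using assms(1) unfolding isub_def by blast
  have pr: "finite V' \<and> (\<forall>a b. E' a b \<longrightarrow> a \<in> V' \<and> b \<in> V')"
    using subdiv_props[OF sd diamond_props] by simp
  obtain n :: nat where n: "n \<notin> V'"
    using pr by (meson ex_new_if_finite infinite_UNIV_nat)
  have Exy: "E' (f x) (f y)" using iso assms(2-4) by blast
  define E'' where "E'' = (\<lambda>a b. (E' a b \<and> {a, b} \<noteq> {f x, f y}) \<or> {a, b} = {f x, n} \<or> {a, b} = {n, f y})"
  have sd2: "subdivision_of diamond (insert n V', E'')"
    unfolding E''_def by (rule sub_step[OF sd Exy n])
  define g where "g = f(z := n)"
  have inj: "inj_on f W" and img: "f ` W = V'" using bij by (auto simp: bij_betw_def)
  have bij2: "bij_betw g (insert z W) (insert n V')"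
    unfolding bij_betw_def g_def using inj img assms(5) n
    by (auto simp: inj_on_def image_iff split: if_splits)
  have fW: "\<And>u. u \<in> W \<Longrightarrow> f u \<in> V'" using img by auto
  have fxn: "f x \<noteq> n" "f y \<noteq> n" using fW assms(2,3) n by auto
  have "\<forall>u\<in>insert z W. \<forall>v\<in>insert z W. F' u v \<longleftrightarrow> E'' (g u) (g v)"
  proof (intro ballI)
    fix u v assume u: "u \<in> insert z W" and v: "v \<in> insert z W"
    show "F' u v \<longleftrightarrow> E'' (g u) (g v)"
    proof (cases "u = z")
      case True
      then show ?thesis
      proof (cases "v = z")
        case True
        then show ?thesis using \<open>u = z\<close> F' fxn pr n assms(2,3,5) unfolding E''_def g_def
          by (auto simp: doubleton_eq_iff)
      next
        case False
        then have vW: "v \<in> W" using v by auto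
        have "g u = n" "g v = f v" using \<open>u = z\<close> False unfolding g_def by auto
        moreover have "\<not> E' n (f v)" using pr n by auto
        moreover have "(f v = f x) = (v = x)" "(f v = f y) = (v = y)"
          using inj vW assms(2,3) by (auto simp: inj_on_def)
        ultimately show ?thesis using \<open>u = z\<close> F' u v vW fxn assms(5) unfolding E''_def
          by (auto simp: doubleton_eq_iff)
      qed
    next
      case False
      then have uW: "u \<in> W" using u by auto
      show ?thesis
      proof (cases "v = z")
        case True
        have "g v = n" "g u = f u" using \<open>v = z\<close> False unfolding g_def by auto
        moreover have "\<not> E' (f u) n" using pr n by auto
        moreover have "(f u = f x) = (u = x)" "(f u = f y) = (u = y)"
          using inj uW assms(2,3) by (auto simp: inj_on_def)
        ultimately show ?thesis using \<open>v = z\<close> F' u v uW fxn assms(5) unfolding E''_def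
          by (auto simp: doubleton_eq_iff)
      next
        case False
        then have vW: "v \<in> W" using v by auto
        have "g v = f v" "g u = f u" using \<open>v \<noteq> z\<close> \<open>u \<noteq> z\<close> unfolding g_def by auto
        moreover have "(f u = f x) = (u = x)" "(f u = f y) = (u = y)"
          "(f v = f x) = (v = x)" "(f v = f y) = (v = y)"
          using inj uW vW assms(2,3) by (auto simp: inj_on_def)
        moreover have "f u \<noteq> n" "f v \<noteq> n" using fW uW vW n by auto
        moreover have "F u v \<longleftrightarrow> E' (f u) (f v)" using iso uW vW by auto
        ultimately show ?thesis using F' uW vW \<open>u \<noteq> z\<close> \<open>v \<noteq> z\<close> fxn assms(5) unfolding E''_def
          by (auto simp: doubleton_eq_iff)
      qed
    qed
  qed
  then show ?thesis unfolding isub_def using sd2 bij2 by blast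
qed

lemma iso4:
  assumes "distinct [a0, a1, a2, a3]" "W = {a0, a1, a2, a3}"
    and F: "\<forall>u\<in>W. \<forall>v\<in>W. F u v \<longleftrightarrow> (u \<noteq> v \<and> \<not>((u = a2 \<and> v = a3) \<or> (u = a3 \<and> v = a2)))"
  shows "isub W F"
proof -
  define f where "f = (\<lambda>u. if u = a0 then 0 else if u = a1 then 1 else if u = a2 then 2 else (3::nat))"
  have fv: "f a0 = 0" "f a1 = 1" "f a2 = 2" "f a3 = 3" using assms(1) unfolding f_def by auto
  have bij: "bij_betw f W {0, 1, 2, 3}"
  proof -
    have "inj_on f W" unfolding inj_on_def assms(2) using fv assms(1) by auto
    moreover have "f ` W = {0,1,2,3}" unfolding assms(2) using fv by auto
    ultimately show ?thesis unfolding bij_betw_def by simp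
  qed
  have dm: "snd diamond = (\<lambda>a b. a \<in> {0, 1, 2, 3} \<and> b \<in> {0, 1, 2, 3} \<and> a \<noteq> b \<and> {a, b} \<noteq> {2::nat, 3})"
    unfolding diamond_def by simp
  have "\<forall>u\<in>W. \<forall>v\<in>W. F u v \<longleftrightarrow> snd diamond (f u) (f v)"
  proof (intro ballI)
    fix u v assume u: "u \<in> W" and v: "v \<in> W"
    have e: "F u v \<longleftrightarrow> (u \<noteq> v \<and> \<not>((u = a2 \<and> v = a3) \<or> (u = a3 \<and> v = a2)))" using F u v by blast
    from u v show "F u v \<longleftrightarrow> snd diamond (f u) (f v)" unfolding e dm assms(2)
      using assms(1) fv by (elim insertE emptyE) (auto simp add: doubleton_eq_iff)
  qed
  then show ?thesis unfolding isub_def using bij sub_refl[of diamond]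
    unfolding diamond_def by auto
qed


definition athet :: "'a set \<Rightarrow> ('a \<Rightarrow> 'a \<Rightarrow> bool) \<Rightarrow> 'a \<Rightarrow> 'a \<Rightarrow> 'a list \<Rightarrow> 'a list \<Rightarrow> 'a list \<Rightarrow> bool" where
"athet W F a b L1 L2 L3 \<longleftrightarrow> a \<noteq> b \<and>
  distinct L1 \<and> 2 \<le> length L1 \<and> hd L1 = a \<and> last L1 = b \<and>
  distinct L2 \<and> 2 \<le> length L2 \<and> hd L2 = a \<and> last L2 = b \<and>
  distinct L3 \<and> 2 \<le> length L3 \<and> hd L3 = a \<and> last L3 = b \<and>
  set L1 \<inter> set L2 = {a, b} \<and> set L1 \<inter> set L3 = {a, b} \<and> set L2 \<inter> set L3 = {a, b} \<and>
  \<not>(length L1 = 2 \<and> length L2 = 2) \<and> \<not>(length L1 = 2 \<and> length L3 = 2) \<and> \<not>(length L2 = 2 \<and> length L3 = 2) \<and>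
  W = set L1 \<union> set L2 \<union> set L3 \<and>
  (\<forall>u\<in>W. \<forall>v\<in>W. F u v \<longleftrightarrow> ledge L1 u v \<or> ledge L2 u v \<or> ledge L3 u v)"

lemma athet_perm1: "athet W F a b L1 L2 L3 \<Longrightarrow> athet W F a b L2 L1 L3"
  unfolding athet_def by blast
lemma athet_perm2: "athet W F a b L1 L2 L3 \<Longrightarrow> athet W F a b L1 L3 L2"
  unfolding athet_def by blast
lemma athet_perm3: "athet W F a b L1 L2 L3 \<Longrightarrow> athet W F a b L3 L2 L1"
  unfolding athet_def by blast

lemma distinct_hd_last: "distinct xs \<Longrightarrow> xs \<noteq> [] \<Longrightarrow> last xs = hd xs \<Longrightarrow> length xs = 1"
  by (cases xs) (auto split: if_splits)

lemma ledge_hd_last: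
  assumes "distinct L" "ledge L (hd L) (last L)" "hd L \<noteq> last L"
  shows "length L = 2"
proof (cases L)
  case Nil then show ?thesis using assms by simp
next
  case (Cons x xs)
  have "\<not> ledge xs x (last L)" using assms(1) Cons ledge_set by fastforce
  then have "xs \<noteq> [] \<and> last xs = hd xs" using assms Cons by (auto simp: ledge_Cons split: if_splits)
  then show ?thesis using distinct_hd_last[of xs] assms(1) Cons by auto
qed

lemma athet_red:
  assumes A: "athet W F a b L1 L2 L3" and l3: "3 \<le> length L1"
    and c: "4 \<le> length L1 \<or> (3 \<le> length L2 \<and> 3 \<le> length L3)"
    and IH: "\<And>W' F' L1'. athet W' F' a b L1' L2 L3 \<Longrightarrow> length L1' < length L1 \<Longrightarrow> isub W' F'"
  shows "isub W F"
proof -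
  note d = A[unfolded athet_def]
  have L1e: "L1 = a # hd (tl L1) # tl (tl L1)" using d l3 by (cases L1; cases "tl L1"; auto)
  have rne0: "tl (tl L1) \<noteq> []" using l3 by (cases L1; cases "tl L1"; auto)
  obtain z rest where L1: "L1 = a # z # rest" and rne: "rest \<noteq> []"
    using L1e rne0 by blast
  define y where "y = hd rest"
  define L1' where "L1' = a # rest"
  define W' where "W' = set L1' \<union> set L2 \<union> set L3"
  define F' where "F' = (\<lambda>u v. ledge L1' u v \<or> ledge L2 u v \<or> ledge L3 u v)"
  have dL: "distinct (a # z # rest)" using d L1 by simp
  have bl: "b = last rest" using d L1 rne by simp
  have brest: "b \<in> set rest" using bl rne by simp
  have ar: "a \<notin> set rest" "z \<noteq> a" "z \<notin> set rest" using dL by auto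
  have zb: "z \<noteq> b" using brest ar by auto
  have zL1: "z \<in> set L1" using L1 by simp
  have zn: "z \<notin> set L2" "z \<notin> set L3" "z \<noteq> a" "z \<noteq> b" "z \<notin> set rest"
  proof -
    show "z \<notin> set L2" using zL1 d ar zb by blast
    show "z \<notin> set L3" using zL1 d ar zb by blast
  qed (use ar zb in auto)
  have sL1': "set L1' = set L1 - {z}" unfolding L1'_def L1 using ar by auto
  have A': "athet W' F' a b L1' L2 L3"
    unfolding athet_def
  proof (intro conjI)
    show "distinct L1'" "2 \<le> length L1'" "hd L1' = a" "last L1' = b"
      unfolding L1'_def using dL rne bl by (auto simp: Suc_le_eq)
    show "set L1' \<inter> set L2 = {a, b}" "set L1' \<inter> set L3 = {a, b}"
      unfolding sL1' using d zn by auto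
    show "\<not> (length L1' = 2 \<and> length L2 = 2)" "\<not> (length L1' = 2 \<and> length L3 = 2)"
      using c L1 unfolding L1'_def by auto
    show "W' = set L1' \<union> set L2 \<union> set L3" by (simp add: W'_def)
    show "\<forall>u\<in>W'. \<forall>v\<in>W'. F' u v = (ledge L1' u v \<or> ledge L2 u v \<or> ledge L3 u v)"
      by (simp add: F'_def)
  qed (use d in auto)
  have isW': "isub W' F'" by (rule IH[OF A']) (simp add: L1 L1'_def)
  have WW: "W = insert z W'" "z \<notin> W'" using d zL1 zn sL1' unfolding W'_def by auto
  have yW: "y \<in> W'" "a \<in> W'" unfolding W'_def L1'_def y_def using rne by auto
  have Fay: "F' a y" unfolding F'_def L1'_def y_def using rne by (simp add: ledge_Cons)
  have yb: "y = b \<Longrightarrow> rest = [b]" using d L1 rne unfolding y_def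
    by (cases rest) (auto simp: last_ConsR split: if_splits)
  have noay: "\<not> ledge L2 a y" "\<not> ledge L3 a y"
  proof -
    show "\<not> ledge L2 a y"
    proof
      assume e: "ledge L2 a y"
      then have "y \<in> set L2" using ledge_set by fastforce
      moreover have "y \<in> set L1" using L1 rne unfolding y_def by simp
      moreover have "y \<noteq> a" using ar rne unfolding y_def by auto
      ultimately have "y = b" using d by blast
      then have "length L2 = 2" using ledge_hd_last[of L2] e d by auto
      moreover have "length L1 = 3" using yb \<open>y = b\<close> L1 by simp
      ultimately show False using c by simp
    qed
    show "\<not> ledge L3 a y"
    proof
      assume e: "ledge L3 a y"
      then have "y \<in> set L3" using ledge_set by fastforce
      moreover have "y \<in> set L1" using L1 rne unfolding y_def by simp
      moreover have "y \<noteq> a" using ar rne unfolding y_def by auto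
      ultimately have "y = b" using d by blast
      then have "length L3 = 2" using ledge_hd_last[of L3] e d by auto
      moreover have "length L1 = 3" using yb \<open>y = b\<close> L1 by simp
      ultimately show False using c by simp
    qed
  qed
  have "\<forall>u\<in>insert z W'. \<forall>v\<in>insert z W'. F u v \<longleftrightarrow>
       ((u \<in> W' \<and> v \<in> W' \<and> F' u v \<and> \<not>((u = a \<and> v = y) \<or> (u = y \<and> v = a)))
        \<or> (u = a \<and> v = z) \<or> (u = z \<and> v = a) \<or> (u = z \<and> v = y) \<or> (u = y \<and> v = z))"
  proof (intro ballI)
    fix u v assume u: "u \<in> insert z W'" and v: "v \<in> insert z W'"
    have Fuv: "F u v \<longleftrightarrow> ledge L1 u v \<or> ledge L2 u v \<or> ledge L3 u v" using d u v WW by blast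
    have r1: "ledge rest u v \<Longrightarrow> u \<noteq> a \<and> v \<noteq> a \<and> u \<noteq> z \<and> v \<noteq> z" using ar zn(5) ledge_set by fastforce
    have r2: "ledge L2 u v \<Longrightarrow> u \<noteq> z \<and> v \<noteq> z" "ledge L3 u v \<Longrightarrow> u \<noteq> z \<and> v \<noteq> z"
      using zn ledge_set by fastforce+
    have r3: "\<not> ledge L2 y a" "\<not> ledge L3 y a" using noay ledge_sym by metis+
    have uvW: "u \<noteq> z \<Longrightarrow> u \<in> W'" "v \<noteq> z \<Longrightarrow> v \<in> W'" using u v by auto
    show "F u v \<longleftrightarrow>
       ((u \<in> W' \<and> v \<in> W' \<and> F' u v \<and> \<not>((u = a \<and> v = y) \<or> (u = y \<and> v = a)))
        \<or> (u = a \<and> v = z) \<or> (u = z \<and> v = a) \<or> (u = z \<and> v = y) \<or> (u = y \<and> v = z))"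
      unfolding Fuv F'_def L1'_def L1 using r1 r2 r3 noay uvW zn yW rne ar
      by (auto simp: ledge_Cons y_def)
  qed
  then have "isub (insert z W') F"
    by (intro sub_ext[OF isW' yW(2) yW(1) Fay WW(2)])
  then show ?thesis using WW by simp
qed

lemma iso_base:
  assumes "distinct [a, b, c, d]" "W = {a, b, c, d}"
    and F: "\<forall>u\<in>W. \<forall>v\<in>W. F u v \<longleftrightarrow> ledge [a, b] u v \<or> ledge [a, c, b] u v \<or> ledge [a, d, b] u v"
  shows "isub W F"
proof (rule iso4[OF assms(1,2)])
  show "\<forall>u\<in>W. \<forall>v\<in>W. F u v = (u \<noteq> v \<and> \<not> (u = c \<and> v = d \<or> u = d \<and> v = c))"
  proof (intro ballI)
    fix u v assume u: "u \<in> W" and v: "v \<in> W"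
    have e: "F u v \<longleftrightarrow> ledge [a, b] u v \<or> ledge [a, c, b] u v \<or> ledge [a, d, b] u v" using F u v by blast
    from u v show "F u v = (u \<noteq> v \<and> \<not> (u = c \<and> v = d \<or> u = d \<and> v = c))"
      unfolding e assms(2) using assms(1) by (elim insertE emptyE) auto
  qed
qed

lemma athet_isub: "athet W F a b L1 L2 L3 \<Longrightarrow> isub W F"
proof (induction "length L1 + length L2 + length L3" arbitrary: W F L1 L2 L3 rule: less_induct)
  case less
  note d = less.prems[unfolded athet_def]
  show ?case
  proof (cases "3 \<le> length L1 \<and> (4 \<le> length L1 \<or> (3 \<le> length L2 \<and> 3 \<le> length L3))")
    case True
    have IH: "isub W' F'" if "athet W' F' a b L1' L2 L3" "length L1' < length L1" for W' F' L1'
      using less.hyps[of L1' L2 L3 W' F'] that by simp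
    show ?thesis using True by (intro athet_red[OF less.prems]) (auto intro: IH)
  next
    case n1: False
    show ?thesis
    proof (cases "3 \<le> length L2 \<and> (4 \<le> length L2 \<or> (3 \<le> length L1 \<and> 3 \<le> length L3))")
      case True
      have IH: "isub W' F'" if "athet W' F' a b L2' L1 L3" "length L2' < length L2" for W' F' L2'
        using less.hyps[of L1 L2' L3 W' F'] that athet_perm1 by fastforce
      show ?thesis using True by (intro athet_red[OF athet_perm1[OF less.prems]]) (auto intro: IH)
    next
      case n2: False
      show ?thesis
      proof (cases "3 \<le> length L3 \<and> (4 \<le> length L3 \<or> (3 \<le> length L2 \<and> 3 \<le> length L1))")
        case True
        have IH: "isub W' F'" if "athet W' F' a b L3' L2 L1" "length L3' < length L3" for W' F' L3'
          using less.hyps[of L1 L2 L3' W' F'] that athet_perm3 by fastforce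
        show ?thesis using True by (intro athet_red[OF athet_perm3[OF less.prems]]) (auto intro: IH)
      next
        case n3: False
        have len: "length L1 \<le> 3" "length L2 \<le> 3" "length L3 \<le> 3"
          "2 \<le> length L1" "2 \<le> length L2" "2 \<le> length L3" using n1 n2 n3 d by auto
        have two3: "\<And>L. 2 \<le> length L \<Longrightarrow> length L \<le> 3 \<Longrightarrow> distinct L \<Longrightarrow> hd L = a \<Longrightarrow> last L = b \<Longrightarrow>
            L = [a, b] \<or> (\<exists>c. L = [a, c, b] \<and> c \<noteq> a \<and> c \<noteq> b)"
        proof -
          fix L :: "'a list" assume "2 \<le> length L" "length L \<le> 3" "distinct L" "hd L = a" "last L = b"
          then show "L = [a, b] \<or> (\<exists>c. L = [a, c, b] \<and> c \<noteq> a \<and> c \<noteq> b)"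
            by (cases L; cases "tl L"; cases "tl (tl L)"; auto)
        qed
        have F: "\<forall>u\<in>W. \<forall>v\<in>W. F u v \<longleftrightarrow> ledge L1 u v \<or> ledge L2 u v \<or> ledge L3 u v" using d by blast
        have ab: "a \<noteq> b" using d by blast
        have len2: "\<And>L. length L = 2 \<Longrightarrow> hd L = a \<Longrightarrow> last L = b \<Longrightarrow> L = [a, b]"
        proof -
          fix L :: "'a list" assume "length L = 2" "hd L = a" "last L = b"
          then show "L = [a, b]" by (cases L; cases "tl L"; auto)
        qed
        have len3: "\<And>L. length L = 3 \<Longrightarrow> distinct L \<Longrightarrow> hd L = a \<Longrightarrow> last L = b \<Longrightarrow> \<exists>c. L = [a, c, b] \<and> c \<noteq> a \<and> c \<noteq> b"
        proof -
          fix L :: "'a list" assume "length L = 3" "distinct L" "hd L = a" "last L = b"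
          then show "\<exists>c. L = [a, c, b] \<and> c \<noteq> a \<and> c \<noteq> b" by (cases L; cases "tl L"; cases "tl (tl L)"; auto)
        qed
        have some2: "length L1 = 2 \<or> length L2 = 2 \<or> length L3 = 2" using n1 len by linarith
        have nt: "\<not>(length L1 = 2 \<and> length L2 = 2)" "\<not>(length L1 = 2 \<and> length L3 = 2)" "\<not>(length L2 = 2 \<and> length L3 = 2)"
          using d by blast+
        have hl: "distinct L1" "hd L1 = a" "last L1 = b" "distinct L2" "hd L2 = a" "last L2 = b"
          "distinct L3" "hd L3 = a" "last L3 = b" using d by blast+
        have W: "W = set L1 \<union> set L2 \<union> set L3" using d by blast
        have i12: "set L1 \<inter> set L2 = {a, b}" "set L1 \<inter> set L3 = {a, b}" "set L2 \<inter> set L3 = {a, b}" using d by blast+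
        from some2 show ?thesis
        proof (elim disjE)
          assume c1: "length L1 = 2"
          have "length L2 = 3" "length L3 = 3" using c1 nt len by auto
          then obtain c where L2: "L2 = [a, c, b]" "c \<noteq> a" "c \<noteq> b"
            using len3[of L2] hl by blast
          obtain d' where L3: "L3 = [a, d', b]" "d' \<noteq> a" "d' \<noteq> b"
            using len3[of L3] hl \<open>length L3 = 3\<close> by blast
          have L1: "L1 = [a, b]" using len2 c1 hl by blast
          have cd: "c \<noteq> d'" using i12 L2 L3 by auto
          show ?thesis
            by (rule iso_base[of a b c d']) (use L1 L2 L3 cd ab F W in auto)
        next
          assume c1: "length L2 = 2"
          have "length L1 = 3" "length L3 = 3" using c1 nt len by auto
          then obtain c where L2: "L1 = [a, c, b]" "c \<noteq> a" "c \<noteq> b"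
            using len3[of L1] hl by blast
          obtain d' where L3: "L3 = [a, d', b]" "d' \<noteq> a" "d' \<noteq> b"
            using len3[of L3] hl \<open>length L3 = 3\<close> by blast
          have L1: "L2 = [a, b]" using len2 c1 hl by blast
          have cd: "c \<noteq> d'" using i12 L2 L3 by auto
          show ?thesis
            by (rule iso_base[of a b c d']) (use L1 L2 L3 cd ab F W in auto)
        next
          assume c1: "length L3 = 2"
          have "length L1 = 3" "length L2 = 3" using c1 nt len by auto
          then obtain c where L2: "L1 = [a, c, b]" "c \<noteq> a" "c \<noteq> b"
            using len3[of L1] hl by blast
          obtain d' where L3: "L2 = [a, d', b]" "d' \<noteq> a" "d' \<noteq> b"
            using len3[of L2] hl \<open>length L2 = 3\<close> by blast
          have L1: "L3 = [a, b]" using len2 c1 hl by blast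
          have cd: "c \<noteq> d'" using i12 L2 L3 by auto
          show ?thesis
            by (rule iso_base[of a b c d']) (use L1 L2 L3 cd ab F W in auto)
        qed
      qed
    qed
  qed
qed


lemma wlk_split: "wlk E (ps @ x # ss) \<longleftrightarrow> wlk E (ps @ [x]) \<and> wlk E (x # ss)"
  by (induction ps) (auto simp: wlk_Cons hd_append)

lemma wlk_split2: "wlk E (ps @ x # ms @ y # ss) \<longleftrightarrow> wlk E (ps @ [x]) \<and> wlk E (x # ms @ [y]) \<and> wlk E (y # ss)"
  using wlk_split[of E ps x "ms @ y # ss"] wlk_split[of E "x # ms" y ss] by simp

definition pth :: "('a \<Rightarrow> 'a \<Rightarrow> bool) \<Rightarrow> 'a set \<Rightarrow> 'a \<Rightarrow> 'a \<Rightarrow> 'a list \<Rightarrow> bool" where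
  "pth E S a b L \<longleftrightarrow> L \<noteq> [] \<and> distinct L \<and> wlk E L \<and> hd L = a \<and> last L = b \<and> set L \<subseteq> S"

lemma pth_glue:
  assumes "pth E S a m X" "pth E S m b Y" "set X \<inter> set Y \<subseteq> {m}"
  shows "pth E S a b (glue X Y)" "set (glue X Y) = set X \<union> set Y"
    "length (glue X Y) = length X + length Y - 1"
proof -
  have p: "X \<noteq> []" "Y \<noteq> []" "last X = hd Y" using assms(1,2) unfolding pth_def by auto
  show "set (glue X Y) = set X \<union> set Y" "length (glue X Y) = length X + length Y - 1"
    using glue_simps[OF p] by auto
  show "pth E S a b (glue X Y)"
    unfolding pth_def using glue_simps[OF p] glue_wlk[OF p] glue_distinct[OF p] assms p
    unfolding pth_def by auto
qed

lemma pth_split: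
  assumes "pth E S a b (ps @ x # ss)"
  shows "pth E S a x (ps @ [x])" "pth E S x b (x # ss)"
  using assms unfolding pth_def by (auto simp: wlk_split hd_append split: if_splits)

lemma pth_len: "pth E S a b L \<Longrightarrow> a \<noteq> b \<Longrightarrow> 2 \<le> length L"
  unfolding pth_def by (cases L; cases "tl L"; auto)

lemma pth_len2: "pth E S a b L \<Longrightarrow> length L = 2 \<Longrightarrow> L = [a, b]"
  unfolding pth_def by (cases L; cases "tl L"; auto)

lemma pth_edge: "E x y \<Longrightarrow> x \<noteq> y \<Longrightarrow> x \<in> S \<Longrightarrow> y \<in> S \<Longrightarrow> pth E S x y [x, y]"
  unfolding pth_def by auto

lemma pth_ends: "pth E S a b L \<Longrightarrow> a \<in> set L \<and> b \<in> set L"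
  unfolding pth_def by (cases L) (auto simp: last_in_set)

lemma int_sub: "A \<inter> B = {a, b} \<Longrightarrow> B' \<subseteq> B \<Longrightarrow> a \<in> B' \<Longrightarrow> b \<in> B' \<Longrightarrow> A \<inter> B' = {a, b}"
  by blast
lemma int_sub2: "B \<inter> A = {a, b} \<Longrightarrow> B' \<subseteq> B \<Longrightarrow> a \<in> B' \<Longrightarrow> b \<in> B' \<Longrightarrow> B' \<inter> A = {a, b}"
  by blast

definition theta :: "('a \<Rightarrow> 'a \<Rightarrow> bool) \<Rightarrow> 'a set \<Rightarrow> 'a \<Rightarrow> 'a \<Rightarrow> 'a \<Rightarrow> 'a list \<Rightarrow> 'a list \<Rightarrow> 'a list \<Rightarrow> bool" where
 "theta E S r a b L1 L2 L3 \<longleftrightarrow> a \<noteq> b \<and> pth E S a b L1 \<and> pth E S a b L2 \<and> pth E S a b L3 \<and>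
   set L1 \<inter> set L2 = {a, b} \<and> set L1 \<inter> set L3 = {a, b} \<and> set L2 \<inter> set L3 = {a, b} \<and>
   5 \<le> length L2 + length L3 \<and> r \<in> set L1 \<and> r \<noteq> a \<and> r \<noteq> b"

lemma thetaD:
  assumes "theta E S r a b L1 L2 L3"
  shows "a \<noteq> b" "pth E S a b L1" "pth E S a b L2" "pth E S a b L3"
    "set L1 \<inter> set L2 = {a, b}" "set L1 \<inter> set L3 = {a, b}" "set L2 \<inter> set L3 = {a, b}"
    "5 \<le> length L2 + length L3" "r \<in> set L1" "r \<noteq> a" "r \<noteq> b"
  using assms unfolding theta_def by auto

lemma thetaI:
  assumes "a \<noteq> b" "pth E S a b L1" "pth E S a b L2" "pth E S a b L3"
    "set L1 \<inter> set L2 = {a, b}" "set L1 \<inter> set L3 = {a, b}" "set L2 \<inter> set L3 = {a, b}"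
    "5 \<le> length L2 + length L3" "r \<in> set L1" "r \<noteq> a" "r \<noteq> b"
  shows "theta E S r a b L1 L2 L3"
  using assms unfolding theta_def by auto

lemma pthD:
  assumes "pth E S a b L"
  shows "L \<noteq> []" "distinct L" "wlk E L" "hd L = a" "last L = b" "set L \<subseteq> S"
  using assms unfolding pth_def by auto

lemma pth_short:
  assumes p: "pth E S a b (ps @ x # ms @ y # ss)" and e: "E x y"
  shows "pth E S a b (ps @ x # y # ss)"
proof -
  have "wlk E (ps @ x # ms @ y # ss)" using pthD[OF p] by simp
  then have "wlk E (ps @ [x]) \<and> wlk E (x # ms @ [y]) \<and> wlk E (y # ss)" by (simp only: wlk_split2)
  then have "wlk E (ps @ x # [] @ y # ss)" using e by (simp only: wlk_split2) simp
  then have "wlk E (ps @ x # y # ss)" by simp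
  moreover have "distinct (ps @ x # y # ss)" "set (ps @ x # y # ss) \<subseteq> S" using pthD[OF p] by auto
  moreover have "hd (ps @ x # y # ss) = a" "last (ps @ x # y # ss) = b" using pthD[OF p] by (auto simp: hd_append)
  ultimately show ?thesis unfolding pth_def by simp
qed

lemma pth_mid:
  assumes p: "pth E S a b (ps @ x # ms @ y # ss)"
  shows "pth E S x y (x # ms @ [y])"
proof -
  have "wlk E (ps @ x # ms @ y # ss)" using pthD[OF p] by simp
  then have "wlk E (x # ms @ [y])" by (simp only: wlk_split2)
  moreover have "distinct (x # ms @ [y])" "set (x # ms @ [y]) \<subseteq> S" using pthD[OF p] by auto
  ultimately show ?thesis unfolding pth_def by simp
qed

locale gctx =
  fixes E :: "'a \<Rightarrow> 'a \<Rightarrow> bool" and S :: "'a set" and r :: 'a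
  assumes sym: "E x y \<Longrightarrow> E y x" and irr: "\<not> E x x"
    and deg: "\<lbrakk>w1 \<in> S; w2 \<in> S; w3 \<in> S; E r w1; E r w2; E r w3\<rbrakk> \<Longrightarrow> w1 = w2 \<or> w1 = w3 \<or> w2 = w3"
begin

definition good :: "nat \<Rightarrow> bool" where
 "good n \<longleftrightarrow> (\<exists>a b L1 L2 L3. theta E S r a b L1 L2 L3 \<and> length L1 + length L2 + length L3 < n)
     \<or> has_induced_subdiv_diamond E S"

lemma goodI: "theta E S r a b L1 L2 L3 \<Longrightarrow> length L1 + length L2 + length L3 < n \<Longrightarrow> good n"
  unfolding good_def by blast

lemma pth_rev: "pth E S a b L \<Longrightarrow> pth E S b a (rev L)"
  unfolding pth_def using wlk_rev[of E L] sym by (auto simp: hd_rev last_rev)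

lemma theta_swap: "theta E S r a b L1 L2 L3 \<Longrightarrow> theta E S r a b L1 L3 L2"
  unfolding theta_def by (auto simp: add.commute)

lemma theta_rev: "theta E S r a b L1 L2 L3 \<Longrightarrow> theta E S r b a (rev L1) (rev L2) (rev L3)"
  unfolding theta_def using pth_rev by (auto simp: insert_commute)

lemma chord_r:
  assumes T: "theta E S r a b L1 L2 L3" and y: "y \<in> set L1 \<union> set L2 \<union> set L3" and e: "E r y"
  shows "ledge L1 r y"
proof -
  have rL1: "r \<in> set L1" "r \<noteq> a" "r \<noteq> b" and pL1: "pth E S a b L1"
    and yS: "y \<in> S"
    using T y unfolding theta_def pth_def by auto
  obtain ps ss where L1: "L1 = ps @ r # ss" using rL1 by (meson split_list)
  have p1: "pth E S a r (ps @ [r])" "pth E S r b (r # ss)" using pth_split[of E S a b ps r ss] pL1 L1 by auto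
  have pne: "ps \<noteq> []" using p1(1) rL1(2) unfolding pth_def by auto
  have sne: "ss \<noteq> []" using p1(2) rL1(3) unfolding pth_def by auto
  define u where "u = last ps"
  define w where "w = hd ss"
  have "wlk E (ps @ [r])" using p1 unfolding pth_def by simp
  then have Eu: "E r u" using pne sym unfolding u_def by simp
  have "wlk E (r # ss)" using p1 unfolding pth_def by simp
  then have Ew: "E r w" using sne unfolding w_def by (simp add: wlk_Cons)
  have dL: "distinct (ps @ r # ss)" using pL1 L1 unfolding pth_def by simp
  have "last ps \<in> set ps" "hd ss \<in> set ss" using pne sne by auto
  then have uw: "u \<noteq> w" using dL unfolding u_def w_def by auto
  have sL: "set (ps @ r # ss) \<subseteq> S" using pL1 L1 unfolding pth_def by simp
  have S: "u \<in> S" "w \<in> S" using sL pne sne unfolding u_def w_def by auto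
  have "y = u \<or> y = w" using deg[OF S yS Eu Ew e] uw by auto
  moreover have "ledge L1 r u" unfolding L1 u_def using pne ledge_sym[of "ps @ r # ss" r "last ps"] by simp
  moreover have "ledge L1 r w" unfolding L1 w_def using sne by (simp add: ledge_Cons)
  ultimately show ?thesis by auto
qed

lemma alpha2:
  assumes T: "theta E S r a b L1 L2 L3" and L2: "L2 = ps @ x # ms @ y # ss" and ms: "ms \<noteq> []"
    and e: "E x y" and nl: "\<not> ledge L3 x y"
  shows "good (length L1 + length L2 + length L3)"
proof -
  have p2o: "pth E S a b L2" and p3: "pth E S a b L3" and ab: "a \<noteq> b"
    and l5: "5 \<le> length L2 + length L3" using T unfolding theta_def by auto
  define L2' where "L2' = ps @ x # y # ss"
  have p2: "pth E S a b L2'"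
  proof -
    have "wlk E (ps @ x # ms @ y # ss)" using p2o unfolding L2 pth_def by simp
    then have "wlk E (ps @ [x]) \<and> wlk E (x # ms @ [y]) \<and> wlk E (y # ss)" by (simp only: wlk_split2)
    then have "wlk E (ps @ x # [] @ y # ss)" using e by (simp only: wlk_split2) simp
    then have "wlk E L2'" unfolding L2'_def by simp
    moreover have "distinct L2'" "set L2' \<subseteq> S" using p2o unfolding L2 L2'_def pth_def by auto
    moreover have "hd L2' = a" "last L2' = b" using p2o unfolding L2 L2'_def pth_def by (auto simp: hd_append)
    ultimately show ?thesis unfolding pth_def L2'_def by simp
  qed
  have s2: "set L2' \<subseteq> set L2" unfolding L2 L2'_def by auto
  have ab2: "a \<in> set L2'" "b \<in> set L2'" using pth_ends[OF p2] by auto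
  have len: "length L2' < length L2" unfolding L2 L2'_def using ms by simp
  have g2: "2 \<le> length L2'" "2 \<le> length L3" using pth_len[OF p2 ab] pth_len[OF p3 ab] by auto
  have "5 \<le> length L2' + length L3"
  proof (rule ccontr)
    assume nn: "\<not> ?thesis"
    show False
    proof (cases "length L2' = 2")
      case True
      then have "ps = []" "ss = []" unfolding L2'_def by auto
      then have "x = a" "y = b" using p2 unfolding L2'_def pth_def by auto
      have "length L3 = 2" using True nn g2 by simp
      then have "L3 = [a, b]" by (rule pth_len2[OF p3])
      then show False using nl \<open>x = a\<close> \<open>y = b\<close> by simp
    next
      case False
      then show False using nn g2 by simp
    qed
  qed
  moreover have i12: "set L1 \<inter> set L2 = {a, b}" "set L2 \<inter> set L3 = {a, b}"
    using T unfolding theta_def by auto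
  moreover have "set L1 \<inter> set L2' = {a, b}" "set L2' \<inter> set L3 = {a, b}"
    using int_sub[OF i12(1) s2 ab2] int_sub2[OF i12(2) s2 ab2] by auto
  ultimately have "theta E S r a b L1 L2' L3" using T p2 unfolding theta_def by simp
  then show ?thesis using len by (intro goodI) auto
qed

lemma alpha1_nonspan:
  assumes T: "theta E S r a b L1 L2 L3" and L1: "L1 = ps @ x # ms @ y # ss" and ms: "ms \<noteq> []"
    and e: "E x y" and rm: "r \<notin> set ms"
  shows "good (length L1 + length L2 + length L3)"
proof -
  define L1' where "L1' = ps @ x # y # ss"
  have p1: "pth E S a b L1'" unfolding L1'_def using pth_short[OF thetaD(2)[OF T, unfolded L1] e] .
  have s1: "set L1' \<subseteq> set L1" unfolding L1 L1'_def by auto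
  have ab1: "a \<in> set L1'" "b \<in> set L1'" using pth_ends[OF p1] by auto
  have len: "length L1' < length L1" unfolding L1 L1'_def using ms by simp
  have i: "set L1' \<inter> set L2 = {a, b}" "set L1' \<inter> set L3 = {a, b}"
    using int_sub2[OF thetaD(5)[OF T] s1 ab1] int_sub2[OF thetaD(6)[OF T] s1 ab1] by auto
  have rr: "r \<in> set L1'" using thetaD(9)[OF T] rm unfolding L1 L1'_def by auto
  have "theta E S r a b L1' L2 L3"
    by (rule thetaI[OF thetaD(1)[OF T] p1 thetaD(3,4)[OF T] i thetaD(7,8)[OF T] rr thetaD(10,11)[OF T]])
  then show ?thesis using len by (intro goodI) auto
qed

lemma alpha1_span:
  assumes T: "theta E S r a b L1 L2 L3" and L1: "L1 = ps @ x # ms @ y # ss" and ms: "ms \<noteq> []"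
    and e: "E x y" and rm: "r \<in> set ms" and nl: "\<not> ledge L2 x y" and le: "length L2 \<le> length L3"
  shows "good (length L1 + length L2 + length L3)"
proof -
  have p1: "pth E S a b (ps @ x # ms @ y # ss)" using thetaD(2)[OF T] L1 by simp
  have p2: "pth E S a b L2" using thetaD(3)[OF T] .
  have ab: "a \<noteq> b" using thetaD(1)[OF T] .
  have d1: "distinct (ps @ x # ms @ y # ss)" using pthD(2)[OF p1] .
  have pa: "pth E S a x (ps @ [x])" using pth_split(1)[of E S a b ps x "ms @ y # ss"] p1 by simp
  have pb: "pth E S y b (y # ss)" using pth_split(2)[of E S a b "ps @ x # ms" y ss] p1 by simp
  have px: "pth E S x y (x # ms @ [y])" using pth_mid[OF p1] .
  have aP: "a \<in> set (ps @ [x])" using pth_ends[OF pa] by simp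
  have bQ: "b \<in> set (y # ss)" using pth_ends[OF pb] by simp
  have i12: "set L1 \<inter> set L2 = {a, b}" using thetaD(5)[OF T] .
  have xyS: "x \<in> S" "y \<in> S" using pthD(6)[OF p1] by auto
  have xy: "x \<noteq> y" using d1 by auto
  define X where "X = rev (ps @ [x])"
  define Z where "Z = rev (y # ss)"
  have pX: "pth E S x a X" unfolding X_def using pth_rev[OF pa] .
  have pZ: "pth E S b y Z" unfolding Z_def using pth_rev[OF pb] .
  have sX: "set X = set (ps @ [x])" unfolding X_def by simp
  have sZ: "set Z = set (y # ss)" unfolding Z_def by simp
  have XL2: "set X \<inter> set L2 \<subseteq> {a}"
  proof -
    have "set X \<subseteq> set L1" unfolding sX L1 by auto
    moreover have "b \<notin> set X" using d1 bQ unfolding sX by auto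
    ultimately show ?thesis using i12 by blast
  qed
  define G1 where "G1 = glue X L2"
  have pG1: "pth E S x b G1" and sG1: "set G1 = set X \<union> set L2"
    and lG1: "length G1 = length X + length L2 - 1"
    using pth_glue[OF pX p2 XL2] unfolding G1_def by auto
  have G1Z: "set G1 \<inter> set Z \<subseteq> {b}"
  proof -
    have "set X \<inter> set Z = {}" using d1 unfolding sX sZ by auto
    moreover have "set L2 \<inter> set Z \<subseteq> {a, b}" using i12 unfolding sZ L1 by auto
    moreover have "a \<notin> set Z" using d1 aP unfolding sZ by auto
    ultimately show ?thesis unfolding sG1 by blast
  qed
  define G where "G = glue G1 Z"
  have pG: "pth E S x y G" and sG: "set G = set G1 \<union> set Z"
    and lG: "length G = length G1 + length Z - 1"
    using pth_glue[OF pG1 pZ G1Z] unfolding G_def by auto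
  have sG': "set G = set ps \<union> {x} \<union> set L2 \<union> {y} \<union> set ss" unfolding sG sG1 sX sZ by auto
  have lG': "length G = length ps + length L2 + length ss"
    using lG lG1 pthD(1)[OF p2] unfolding X_def Z_def by (cases L2) auto
  define M where "M = x # ms @ [y]"
  have sM: "set M \<inter> set G = {x, y}"
  proof -
    have "set ms \<inter> (set ps \<union> {x} \<union> {y} \<union> set ss) = {}" using d1 by auto
    moreover have "a \<notin> set ms" "b \<notin> set ms" using d1 aP bQ by auto
    moreover have "set ms \<inter> set L2 \<subseteq> {a, b}" using i12 unfolding L1 by auto
    ultimately have "set ms \<inter> set G = {}" unfolding sG' by blast
    then show ?thesis unfolding M_def sG' by auto
  qed
  have l2: "2 \<le> length L2" using pth_len[OF p2 ab] .
  have l3: "3 \<le> length L3" using le l2 thetaD(8)[OF T] by linarith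
  have lG3: "3 \<le> length G"
  proof (rule ccontr)
    assume "\<not> ?thesis"
    then have "length L2 = 2" "length ps = 0" "length ss = 0" using lG' l2 by linarith+
    then have "length L2 = 2" "ps = []" "ss = []" by auto
    then have "L2 = [a, b]" "x = a" "y = b" using pth_len2[OF p2] pthD(4,5)[OF p1] by auto
    then show False using nl by simp
  qed
  have "theta E S r x y M [x, y] G"
  proof (rule thetaI)
    show "pth E S x y M" unfolding M_def using px .
    show "pth E S x y [x, y]" using pth_edge[of E x y S] e xy xyS by blast
    show "set M \<inter> set [x, y] = {x, y}" unfolding M_def by auto
    show "set [x, y] \<inter> set G = {x, y}" unfolding sG' by auto
    show "5 \<le> length [x, y] + length G" using lG3 by simp
    show "r \<in> set M" "r \<noteq> x" "r \<noteq> y" using rm d1 unfolding M_def by auto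
    show "set M \<inter> set G = {x, y}" using sM .
  qed (use xy pG in auto)
  moreover have "length M + length [x, y] + length G < length L1 + length L2 + length L3"
    using lG' l3 unfolding M_def L1 by simp
  ultimately show ?thesis by (rule goodI)
qed

lemma alpha1:
  assumes T: "theta E S r a b L1 L2 L3" and L1: "L1 = ps @ x # ms @ y # ss" and ms: "ms \<noteq> []"
    and e: "E x y" and nl2: "\<not> ledge L2 x y" and nl3: "\<not> ledge L3 x y"
  shows "good (length L1 + length L2 + length L3)"
proof (cases "r \<in> set ms")
  case False then show ?thesis using alpha1_nonspan[OF T L1 ms e] by blast
next
  case True
  show ?thesis
  proof (cases "length L2 \<le> length L3")
    case True
    then show ?thesis using alpha1_span[OF T L1 ms e \<open>r \<in> set ms\<close> nl2] by blast
  next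
    case False
    then have "good (length L1 + length L3 + length L2)"
      using alpha1_span[OF theta_swap[OF T] L1 ms e \<open>r \<in> set ms\<close> nl3] by simp
    then show ?thesis by (simp add: ac_simps)
  qed
qed

end


lemma pth_Cons: "pth E S a b L \<Longrightarrow> E x a \<Longrightarrow> x \<notin> set L \<Longrightarrow> x \<in> S \<Longrightarrow> pth E S x b (x # L)"
  unfolding pth_def by (cases L) auto

lemma pth_decomp: "pth E S a b L \<Longrightarrow> a \<noteq> b \<Longrightarrow> \<exists>ms. L = a # ms @ [b]"
  unfolding pth_def
  by (cases L rule: rev_cases; cases "butlast L"; auto)

lemma split_int:
  assumes "pth E S a b L" "x \<in> set L" "x \<noteq> a" "x \<noteq> b"
  obtains ps ss where "L = ps @ x # ss" "ps \<noteq> []" "ss \<noteq> []" "hd ps = a" "last ss = b"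
proof -
  obtain ps ss where L: "L = ps @ x # ss" using assms(2) by (meson split_list)
  have "ps \<noteq> []" using assms(1,3) L unfolding pth_def by auto
  moreover have "ss \<noteq> []" using assms(1,4) L unfolding pth_def by auto
  moreover have "hd ps = a" using assms(1) L \<open>ps \<noteq> []\<close> unfolding pth_def by simp
  moreover have "last ss = b" using assms(1) L \<open>ss \<noteq> []\<close> unfolding pth_def by simp
  ultimately show ?thesis using that L by blast
qed

lemma pth_last_in: "pth E S a b (ps @ x # ss) \<Longrightarrow> ss \<noteq> [] \<Longrightarrow> b \<in> set ss"
  unfolding pth_def by auto

lemma pth_hd_in: "pth E S a b (ps @ x # ss) \<Longrightarrow> ps \<noteq> [] \<Longrightarrow> a \<in> set ps"
  unfolding pth_def by auto

lemma single_hd: "xs \<noteq> [] \<Longrightarrow> length xs < 2 \<Longrightarrow> xs = [hd xs]"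
  by (cases xs) auto

lemma single_last: "xs \<noteq> [] \<Longrightarrow> length xs < 2 \<Longrightarrow> xs = [last xs]"
  by (cases xs) auto

context gctx begin

lemma diamond4:
  assumes "distinct [a0, a1, a2, a3]" "a0 \<in> S" "a1 \<in> S" "a2 \<in> S" "a3 \<in> S"
    "E a0 a1" "E a0 a2" "E a0 a3" "E a1 a2" "E a1 a3" "\<not> E a2 a3"
  shows "has_induced_subdiv_diamond E S"
proof -
  let ?W = "{a0, a1, a2, a3}"
  have "\<forall>u\<in>?W. \<forall>v\<in>?W. E u v \<longleftrightarrow> (u \<noteq> v \<and> \<not>((u = a2 \<and> v = a3) \<or> (u = a3 \<and> v = a2)))"
  proof (intro ballI)
    fix u v assume u: "u \<in> ?W" and v: "v \<in> ?W"
    have s: "E a1 a0" "E a2 a0" "E a3 a0" "E a2 a1" "E a3 a1" "\<not> E a3 a2"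
      using assms(6-11) sym by blast+
    from u v show "E u v \<longleftrightarrow> (u \<noteq> v \<and> \<not>((u = a2 \<and> v = a3) \<or> (u = a3 \<and> v = a2)))"
      using assms(1,6-11) s irr apply (elim insertE emptyE) apply simp_all apply blast+ done
  qed
  then have "isub ?W E" by (rule iso4[OF assms(1) refl])
  then show ?thesis by (rule has_diamond_of_isub[rotated]) (use assms(2-5) in auto)
qed

lemma beta23_core:
  assumes T: "theta E S r a b L1 L2 L3" and L2: "L2 = p2 @ x # s2" and L3: "L3 = p3 @ y # s3"
    and ne: "p2 \<noteq> []" "s2 \<noteq> []" "p3 \<noteq> []" and s3: "2 \<le> length s3" and e: "E x y"
  shows "good (length L1 + length L2 + length L3)"
proof -
  have p1: "pth E S a b L1" and p2: "pth E S a b L2" and p3: "pth E S a b L3" and ab: "a \<noteq> b"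
    using thetaD[OF T] by auto
  have i12: "set L1 \<inter> set L2 = {a, b}" and i13: "set L1 \<inter> set L3 = {a, b}"
    and i23: "set L2 \<inter> set L3 = {a, b}" using thetaD[OF T] by auto
  have rr: "r \<in> set L1" "r \<noteq> a" "r \<noteq> b" using thetaD[OF T] by auto
  have d2: "distinct (p2 @ x # s2)" using pthD(2)[OF p2] L2 by simp
  have d3: "distinct (p3 @ y # s3)" using pthD(2)[OF p3] L3 by simp
  have hp2: "a \<in> set p2" using pthD(4)[OF p2] ne L2 by (cases p2) auto
  have ls2: "b \<in> set s2" using pth_last_in[of E S a b p2 x s2] p2 ne L2 by simp
  have hp3: "a \<in> set p3" using pthD(4)[OF p3] ne L3 by (cases p3) auto
  have "s3 \<noteq> []" using s3 by auto
  then have ls3: "b \<in> set s3" using pth_last_in[of E S a b p3 y s3] p3 L3 by simp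
  have xa: "x \<noteq> a" "x \<noteq> b" using d2 hp2 ls2 by auto
  have ya: "y \<noteq> a" "y \<noteq> b" using d3 hp3 ls3 by auto
  have xL1: "x \<notin> set L1" using i12 xa L2 by auto
  have xL3: "x \<notin> set L3" using i23 xa L2 by auto
  have yL2: "y \<notin> set L2" using i23 ya L3 by auto
  have pxs: "pth E S x b (x # s2)" using pth_split(2)[of E S a b p2 x s2] p2 L2 by simp
  have pp2: "pth E S a x (p2 @ [x])" using pth_split(1)[of E S a b p2 x s2] p2 L2 by simp
  have pp3: "pth E S a y (p3 @ [y])" using pth_split(1)[of E S a b p3 y s3] p3 L3 by simp
  have xS: "x \<in> S" using pthD(6)[OF pxs] by simp
  define A where "A = glue (x # s2) (rev L1)"
  have gA: "set (x # s2) \<inter> set (rev L1) \<subseteq> {b}" using xL1 i12 d2 hp2 unfolding L2 by auto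
  have pA: "pth E S x a A" and sA: "set A = set (x # s2) \<union> set L1"
    and lA: "length A = length (x # s2) + length L1 - 1"
    using pth_glue[OF pxs pth_rev[OF p1] gA] unfolding A_def by auto
  define B where "B = rev (p2 @ [x])"
  have pB: "pth E S x a B" unfolding B_def by (rule pth_rev[OF pp2])
  define C where "C = x # rev (p3 @ [y])"
  have pC: "pth E S x a C" unfolding C_def
    by (rule pth_Cons[OF pth_rev[OF pp3] e _ xS]) (use xL3 L3 in auto)
  have sB: "set B = insert x (set p2)" unfolding B_def by auto
  have sC: "set C = insert x (insert y (set p3))" unfolding C_def by auto
  have iAB: "set A \<inter> set B = {x, a}"
  proof -
    have "set s2 \<inter> set p2 = {}" using d2 by auto
    moreover have "set L1 \<inter> set p2 \<subseteq> {a}" using i12 d2 ls2 unfolding L2 by auto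
    moreover have "a \<in> set L1" using pth_ends[OF p1] by simp
    ultimately show ?thesis unfolding sA sB using hp2 xL1 by auto
  qed
  have iAC: "set A \<inter> set C = {x, a}"
  proof -
    have "set s2 \<inter> insert y (set p3) = {}"
    proof -
      have "set s2 \<inter> insert y (set p3) \<subseteq> {a, b}" using i23 unfolding L2 L3 by auto
      moreover have "a \<notin> set s2" using d2 hp2 by auto
      moreover have "b \<notin> insert y (set p3)" using d3 ls3 ya by auto
      ultimately show ?thesis by blast
    qed
    moreover have "set L1 \<inter> insert y (set p3) \<subseteq> {a}" using i13 d3 ls3 ya unfolding L3 by auto
    moreover have "a \<in> set L1" using pth_ends[OF p1] by simp
    ultimately show ?thesis unfolding sA sC using hp3 xL1 by auto
  qed
  have iBC: "set B \<inter> set C = {x, a}"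
  proof -
    have "set p2 \<inter> insert y (set p3) \<subseteq> {a, b}" using i23 unfolding L2 L3 by auto
    moreover have "b \<notin> set p2" using d2 ls2 by auto
    ultimately show ?thesis unfolding sB sC using hp2 hp3 by auto
  qed
  have lB: "length B = length p2 + 1" unfolding B_def by simp
  have lC: "length C = length p3 + 2" unfolding C_def by simp
  have "theta E S r x a A B C"
  proof (rule thetaI[OF xa(1) pA pB pC iAB iAC iBC])
    show "5 \<le> length B + length C" using lB lC ne by (cases p2; cases p3; auto)
    show "r \<in> set A" "r \<noteq> x" "r \<noteq> a" using rr xL1 unfolding sA by auto
  qed
  moreover have "length A + length B + length C < length L1 + length L2 + length L3"
    using lA lB lC s3 pthD(1)[OF p1] unfolding L2 L3 by (cases L1) auto
  ultimately show ?thesis by (rule goodI)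
qed


lemma beta23:
  assumes T: "theta E S r a b L1 L2 L3" and x: "x \<in> set L2" "x \<noteq> a" "x \<noteq> b"
    and y: "y \<in> set L3" "y \<noteq> a" "y \<noteq> b" and e: "E x y"
  shows "good (length L1 + length L2 + length L3)"
proof -
  have p1: "pth E S a b L1" and p2: "pth E S a b L2" and p3: "pth E S a b L3" and ab: "a \<noteq> b"
    using thetaD[OF T] by auto
  obtain p2 s2 where L2: "L2 = p2 @ x # s2" "p2 \<noteq> []" "s2 \<noteq> []" "hd p2 = a" "last s2 = b"
    using split_int[OF p2 x] by blast
  obtain p3 s3 where L3: "L3 = p3 @ y # s3" "p3 \<noteq> []" "s3 \<noteq> []" "hd p3 = a" "last s3 = b"
    using split_int[OF p3 y] by blast
  have e': "E y x" using sym e .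
  show ?thesis
  proof (cases "2 \<le> length s3")
    case True
    show ?thesis using beta23_core[OF T L2(1) L3(1) L2(2,3) L3(2) True e] by blast
  next
    case n1: False
    show ?thesis
    proof (cases "2 \<le> length p3")
      case True
      have "good (length (rev L1) + length (rev L2) + length (rev L3))"
        by (rule beta23_core[OF theta_rev[OF T], of "rev s2" x "rev p2" "rev s3" y "rev p3"])
           (use L2 L3 True e in auto)
      then show ?thesis by simp
    next
      case n2: False
      show ?thesis
      proof (cases "2 \<le> length s2")
        case True
        have "good (length L1 + length L3 + length L2)"
          by (rule beta23_core[OF theta_swap[OF T] L3(1) L2(1) L3(2,3) L2(2) True e'])
        then show ?thesis by (simp add: ac_simps)
      next
        case n3: False
        show ?thesis
        proof (cases "2 \<le> length p2")
          case True
          have "good (length (rev L1) + length (rev L3) + length (rev L2))"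
            by (rule beta23_core[OF theta_rev[OF theta_swap[OF T]], of "rev s3" y "rev p3" "rev s2" x "rev p2"])
               (use L2 L3 True e' in auto)
          then show ?thesis by (simp add: ac_simps)
        next
          case n4: False
          have q: "p2 = [a]" "s2 = [b]" "p3 = [a]" "s3 = [b]"
            using single_hd[of p2] single_last[of s2] single_hd[of p3] single_last[of s3] n1 n2 n3 n4 L2 L3
            by auto
          have L2': "L2 = [a, x, b]" and L3': "L3 = [a, y, b]" using q L2 L3 by auto
          have w2: "wlk E [a, x, b]" and w3: "wlk E [a, y, b]" using pthD(3)[OF p2] pthD(3)[OF p3] L2' L3' by auto
          have xy: "x \<noteq> y" using thetaD(7)[OF T] L2' L3' x(2,3) by auto
          show ?thesis
          proof (cases "E a b")
            case True
            obtain ms where L1: "L1 = a # ms @ [b]" using pth_decomp[OF p1 ab] by blast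
            have "ms \<noteq> []" using thetaD(9-11)[OF T] L1 by auto
            have "good (length L1 + length L2 + length L3)"
              by (rule alpha1[OF T, of "[]" a ms b "[]"]) (use L1 \<open>ms \<noteq> []\<close> True L2' L3' x y ab in auto)
            then show ?thesis .
          next
            case False
            have S: "x \<in> S" "y \<in> S" "a \<in> S" "b \<in> S" using pthD(6)[OF p2] pthD(6)[OF p3] L2' L3' by auto
            have "has_induced_subdiv_diamond E S"
              by (rule diamond4[of x y a b]) (use xy x y ab S e w2 w3 False sym in auto)
            then show ?thesis unfolding good_def by blast
          qed
        qed
      qed
    qed
  qed
qed

end


context gctx begin

lemma beta12_core:
  assumes T: "theta E S r a b L1 L2 L3" and L1: "L1 = p1 @ x # s1" and L2: "L2 = p2 @ y # s2"
    and ne: "p1 \<noteq> []" "s1 \<noteq> []" "p2 \<noteq> []" "s2 \<noteq> []" and rs: "r \<in> set s1" and e: "E x y"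
  shows "good (length L1 + length L2 + length L3)"
proof -
  have p1: "pth E S a b L1" and p2: "pth E S a b L2" and p3: "pth E S a b L3" and ab: "a \<noteq> b"
    using thetaD[OF T] by auto
  have i12: "set L1 \<inter> set L2 = {a, b}" and i13: "set L1 \<inter> set L3 = {a, b}"
    and i23: "set L2 \<inter> set L3 = {a, b}" using thetaD[OF T] by auto
  have rr: "r \<noteq> a" "r \<noteq> b" using thetaD[OF T] by auto
  have d1: "distinct (p1 @ x # s1)" using pthD(2)[OF p1] L1 by simp
  have d2: "distinct (p2 @ y # s2)" using pthD(2)[OF p2] L2 by simp
  have ap1: "a \<in> set p1" using pth_hd_in[of E S a b p1 x s1] p1 ne L1 by simp
  have bs1: "b \<in> set s1" using pth_last_in[of E S a b p1 x s1] p1 ne L1 by simp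
  have ap2: "a \<in> set p2" using pth_hd_in[of E S a b p2 y s2] p2 ne L2 by simp
  have bs2: "b \<in> set s2" using pth_last_in[of E S a b p2 y s2] p2 ne L2 by simp
  have xa: "x \<noteq> a" "x \<noteq> b" using d1 ap1 bs1 by auto
  have ya: "y \<noteq> a" "y \<noteq> b" using d2 ap2 bs2 by auto
  have xL2: "x \<notin> set L2" using i12 xa L1 by auto
  have xL3: "x \<notin> set L3" using i13 xa L1 by auto
  have yL1: "y \<notin> set L1" using i12 ya L2 by auto
  have yL3: "y \<notin> set L3" using i23 ya L2 by auto
  have aL3: "a \<in> set L3" "b \<in> set L3" using pth_ends[OF p3] by auto
  have pa1: "pth E S a x (p1 @ [x])" using pth_split(1)[of E S a b p1 x s1] p1 L1 by simp
  have pb1: "pth E S x b (x # s1)" using pth_split(2)[of E S a b p1 x s1] p1 L1 by simp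
  have pa2: "pth E S a y (p2 @ [y])" using pth_split(1)[of E S a b p2 y s2] p2 L2 by simp
  have pb2: "pth E S y b (y # s2)" using pth_split(2)[of E S a b p2 y s2] p2 L2 by simp
  have xS: "x \<in> S" "y \<in> S" using pthD(6)[OF pb1] pthD(6)[OF pb2] by auto
  have e': "E y x" using sym e .
  have xy: "x \<noteq> y" using yL1 L1 by auto
  have s1p1: "set s1 \<inter> set p1 = {}" "x \<notin> set s1" "x \<notin> set p1" using d1 by auto
  have s2p2: "set s2 \<inter> set p2 = {}" "y \<notin> set s2" "y \<notin> set p2" using d2 by auto
  have as1: "a \<notin> set s1" "b \<notin> set p1" using d1 ap1 bs1 by auto
  have as2: "a \<notin> set s2" "b \<notin> set p2" using d2 ap2 bs2 by auto
  have s1p2: "set s1 \<inter> set p2 = {}" using i12 as1 as2 unfolding L1 L2 by auto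
  have s2p1: "set s2 \<inter> set p1 = {}" using i12 as1 as2 unfolding L1 L2 by auto
  have p1p2: "set p1 \<inter> set p2 = {a}" using i12 as1 as2 ap1 ap2 unfolding L1 L2 by auto
  have s1s2: "set s1 \<inter> set s2 = {b}" using i12 as1 as2 bs1 bs2 unfolding L1 L2 by auto
  have p1L3: "set p1 \<inter> set L3 = {a}" using i13 as1 ap1 aL3 unfolding L1 by auto
  have s1L3: "set s1 \<inter> set L3 = {b}" using i13 as1 bs1 aL3 unfolding L1 by auto
  have p2L3: "set p2 \<inter> set L3 = {a}" using i23 as2 ap2 aL3 unfolding L2 by auto
  have s2L3: "set s2 \<inter> set L3 = {b}" using i23 as2 bs2 aL3 unfolding L2 by auto
  have lL1: "length L1 = length p1 + 1 + length s1" and lL2: "length L2 = length p2 + 1 + length s2"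
    using L1 L2 by auto
  have lp: "1 \<le> length p1" "1 \<le> length p2" "1 \<le> length s1" "1 \<le> length s2" using ne by (auto simp: Suc_le_eq)
  have l3: "2 \<le> length L3" using pth_len[OF p3 ab] .
  consider (o1) "3 \<le> length L3" | (o2) "2 \<le> length s2" | (o3) "2 \<le> length p2"
    | (o4) "length L3 = 2" "p2 = [a]" "s2 = [b]" "2 \<le> length p1"
    | (dd) "length L3 = 2" "p2 = [a]" "s2 = [b]" "p1 = [a]"
  proof -
    assume h: "3 \<le> length L3 \<Longrightarrow> thesis" "2 \<le> length s2 \<Longrightarrow> thesis" "2 \<le> length p2 \<Longrightarrow> thesis"
      "length L3 = 2 \<Longrightarrow> p2 = [a] \<Longrightarrow> s2 = [b] \<Longrightarrow> 2 \<le> length p1 \<Longrightarrow> thesis"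
      "length L3 = 2 \<Longrightarrow> p2 = [a] \<Longrightarrow> s2 = [b] \<Longrightarrow> p1 = [a] \<Longrightarrow> thesis"
    show thesis
    proof (cases "3 \<le> length L3 \<or> 2 \<le> length s2 \<or> 2 \<le> length p2")
      case True then show ?thesis using h(1-3) by blast
    next
      case False
      then have q: "length L3 = 2" "p2 = [a]" "s2 = [b]"
        using l3 single_hd[of p2] single_last[of s2] ne L2 p2 pthD(4,5)[OF p2] by auto
      show ?thesis
      proof (cases "2 \<le> length p1")
        case True then show ?thesis using h(4) q by blast
      next
        case False
        then have "p1 = [a]" using single_hd[of p1] ne pthD(4)[OF p1] L1 by auto
        then show ?thesis using h(5) q by blast
      qed
    qed
  qed
  then show ?thesis
  proof cases
    case o1
    define A where "A = glue (x # s1) (rev (y # s2))"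
    have gA: "set (x # s1) \<inter> set (rev (y # s2)) \<subseteq> {b}" using s1s2 xL2 yL1 L1 L2 by auto
    have pA: "pth E S x y A" and sA: "set A = set (x # s1) \<union> set (y # s2)"
      and lA: "length A = length (x # s1) + length (y # s2) - 1"
      using pth_glue[OF pb1 pth_rev[OF pb2] gA] unfolding A_def by auto
    define C where "C = glue (rev (p1 @ [x])) (p2 @ [y])"
    have gC: "set (rev (p1 @ [x])) \<inter> set (p2 @ [y]) \<subseteq> {a}" using p1p2 xL2 yL1 L1 L2 by auto
    have pC: "pth E S x y C" and sC: "set C = set (p1 @ [x]) \<union> set (p2 @ [y])"
      and lC: "length C = length (p1 @ [x]) + length (p2 @ [y]) - 1"
      using pth_glue[OF pth_rev[OF pa1] pa2 gC] unfolding C_def by auto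
    have "theta E S r x y A [x, y] C"
    proof (rule thetaI[OF xy pA _ pC])
      show "pth E S x y [x, y]" using pth_edge[of E x y S] e xy xS by blast
      show "set A \<inter> set [x, y] = {x, y}" unfolding sA by auto
      show "set A \<inter> set C = {x, y}" unfolding sA sC using s1p1 s2p2 s1p2 s2p1 xL2 yL1 L1 L2 by auto
      show "set [x, y] \<inter> set C = {x, y}" unfolding sC by auto
      show "5 \<le> length [x, y] + length C" using lC lp by simp
      show "r \<in> set A" "r \<noteq> x" "r \<noteq> y" using rs s1p1 yL1 L1 unfolding sA by auto
    qed
    moreover have "length A + length [x, y] + length C < length L1 + length L2 + length L3"
      using lA lC lL1 lL2 o1 by simp
    ultimately show ?thesis by (rule goodI)
  next
    case o2
    define A where "A = glue (x # s1) (rev L3)"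
    have gA: "set (x # s1) \<inter> set (rev L3) \<subseteq> {b}" using s1L3 xL3 by auto
    have pA: "pth E S x a A" and sA: "set A = set (x # s1) \<union> set L3"
      and lA: "length A = length (x # s1) + length L3 - 1"
      using pth_glue[OF pb1 pth_rev[OF p3] gA] unfolding A_def by auto
    define B where "B = rev (p1 @ [x])"
    have pB: "pth E S x a B" unfolding B_def by (rule pth_rev[OF pa1])
    define C where "C = x # rev (p2 @ [y])"
    have pC: "pth E S x a C" unfolding C_def
      by (rule pth_Cons[OF pth_rev[OF pa2] e _ xS(1)]) (use xL2 L2 in auto)
    have sB: "set B = insert x (set p1)" unfolding B_def by auto
    have sC: "set C = insert x (insert y (set p2))" unfolding C_def by auto
    have "theta E S r x a A B C"
    proof (rule thetaI[OF xa(1) pA pB pC])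
      show "set A \<inter> set B = {x, a}" unfolding sA sB using s1p1 p1L3 ap1 aL3 xL3 by auto
      show "set A \<inter> set C = {x, a}" unfolding sA sC using s1p2 p2L3 ap2 aL3 xL3 yL3 yL1 L1 by auto
      show "set B \<inter> set C = {x, a}" unfolding sB sC using p1p2 yL1 L1 by auto
      show "5 \<le> length B + length C" using lp unfolding B_def C_def by simp
      show "r \<in> set A" "r \<noteq> x" "r \<noteq> a" using rs s1p1 rr unfolding sA by auto
    qed
    moreover have "length A + length B + length C < length L1 + length L2 + length L3"
      using lA lL1 lL2 o2 lp unfolding B_def C_def by simp
    ultimately show ?thesis by (rule goodI)
  next
    case o3
    define A where "A = x # s1"
    define B where "B = x # y # s2"
    have pB: "pth E S x b B" unfolding B_def
      by (rule pth_Cons[OF pb2 e _ xS(1)]) (use xL2 L2 in auto)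
    define C where "C = glue (rev (p1 @ [x])) L3"
    have gC: "set (rev (p1 @ [x])) \<inter> set L3 \<subseteq> {a}" using p1L3 xL3 by auto
    have pC: "pth E S x b C" and sC: "set C = set (p1 @ [x]) \<union> set L3"
      and lC: "length C = length (p1 @ [x]) + length L3 - 1"
      using pth_glue[OF pth_rev[OF pa1] p3 gC] unfolding C_def by auto
    have "theta E S r x b A B C"
    proof (rule thetaI[OF xa(2) _ pB pC])
      show "pth E S x b A" unfolding A_def using pb1 .
      show "set A \<inter> set B = {x, b}" unfolding A_def B_def using s1s2 yL1 L1 bs1 by auto
      show "set A \<inter> set C = {x, b}" unfolding A_def sC using s1p1 s1L3 bs1 aL3 by auto
      show "set B \<inter> set C = {x, b}" unfolding B_def sC using s2p1 s2L3 yL1 yL3 bs2 aL3 L1 by auto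
      show "5 \<le> length B + length C" using lC l3 lp unfolding B_def by simp
      show "r \<in> set A" "r \<noteq> x" "r \<noteq> b" using rs s1p1 rr unfolding A_def by auto
    qed
    moreover have "length A + length B + length C < length L1 + length L2 + length L3"
      using lC lL1 lL2 o3 lp unfolding A_def B_def by simp
    ultimately show ?thesis by (rule goodI)
  next
    case o4
    have L3': "L3 = [a, b]" using pth_len2[OF p3 o4(1)] .
    have L2': "L2 = [a, y, b]" using L2 o4 by simp
    have w2: "E a y" "E y b" using pthD(3)[OF p2] L2' by auto
    have eab: "E a b" using pthD(3)[OF p3] L3' by auto
    have aS: "a \<in> S" "b \<in> S" using pthD(6)[OF p3] L3' by auto
    define A where "A = y # x # s1"
    have pA: "pth E S y b A" unfolding A_def
      by (rule pth_Cons[OF pb1 e' _ xS(2)]) (use yL1 L1 in auto)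
    have pB: "pth E S y b [y, b]" using pth_edge[of E y b S] w2 ya aS xS by blast
    have pC: "pth E S y b [y, a, b]" using pth_Cons[OF p3 sym[OF w2(1)] yL3 xS(2)] L3' by simp
    have "theta E S r y b A [y, b] [y, a, b]"
    proof (rule thetaI[OF ya(2) pA pB pC])
      show "set A \<inter> set [y, b] = {y, b}" unfolding A_def using bs1 by auto
      show "set A \<inter> set [y, a, b] = {y, b}" unfolding A_def using bs1 as1 xa by auto
      show "set [y, b] \<inter> set [y, a, b] = {y, b}" by auto
      show "5 \<le> length [y, b] + length [y, a, b]" by simp
      show "r \<in> set A" "r \<noteq> y" "r \<noteq> b" using rs yL1 L1 rr unfolding A_def by auto
    qed
    moreover have "length A + length [y, b] + length [y, a, b] < length L1 + length L2 + length L3"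
      using lL1 o4 L2' L3' unfolding A_def by simp
    ultimately show ?thesis by (rule goodI)
  next
    case dd
    have L3': "L3 = [a, b]" using pth_len2[OF p3 dd(1)] .
    have L2': "L2 = [a, y, b]" using L2 dd by simp
    have L1': "L1 = a # x # s1" using L1 dd by simp
    have w2: "E a y" "E y b" using pthD(3)[OF p2] L2' by auto
    have eab: "E a b" using pthD(3)[OF p3] L3' by auto
    have eax: "E a x" using pthD(3)[OF p1] L1' by (auto simp: wlk_Cons)
    have aS: "a \<in> S" "b \<in> S" using pthD(6)[OF p3] L3' by auto
    show ?thesis
    proof (cases "E x b")
      case True
      have ls1: "last s1 = b" using pthD(5)[OF p1] L1 ne by simp
      define ms where "ms = butlast s1"
      have s1: "s1 = ms @ [b]" unfolding ms_def using append_butlast_last_id[of s1] ls1 ne by simp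
      have "ms \<noteq> []" using rs rr s1 by auto
      have L1'': "L1 = [a] @ x # ms @ b # []" using L1' s1 by simp
      have n2: "\<not> ledge L2 x b" using xL2 ledge_set by fastforce
      have n3: "\<not> ledge L3 x b" using xL3 ledge_set by fastforce
      show ?thesis by (rule alpha1[OF T L1'' \<open>ms \<noteq> []\<close> True n2 n3])
    next
      case False
      have "has_induced_subdiv_diamond E S"
        by (rule diamond4[of a y x b]) (use xy xa ya aS xS w2 eab eax e False sym in auto)
      then show ?thesis unfolding good_def by blast
    qed
  qed
qed

end


lemma two_split:
  assumes "distinct L" "u \<in> set L" "v \<in> set L" "u \<noteq> v" "\<not> ledge L u v"
  shows "\<exists>ps ms ss. ms \<noteq> [] \<and> (L = ps @ u # ms @ v # ss \<or> L = ps @ v # ms @ u # ss)"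
proof -
  obtain ps ss where L: "L = ps @ u # ss" using assms(2) by (meson split_list)
  have "v \<in> set ps \<or> v \<in> set ss" using assms(3,4) L by auto
  then show ?thesis
  proof
    assume "v \<in> set ps"
    then obtain ps' ms where ps: "ps = ps' @ v # ms" by (meson split_list)
    have "ms \<noteq> []"
    proof
      assume "ms = []"
      then have "ledge L u v" unfolding L ps by (simp add: ledge_Cons)
      then show False using assms(5) by simp
    qed
    then show ?thesis using L ps by auto
  next
    assume "v \<in> set ss"
    then obtain ms ss' where ss: "ss = ms @ v # ss'" by (meson split_list)
    have "ms \<noteq> []"
    proof
      assume "ms = []"
      then have "ledge L u v" unfolding L ss by (simp add: ledge_Cons)
      then show False using assms(5) by simp
    qed
    then show ?thesis using L ss by auto
  qed
qed

context gctx begin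

lemma beta12:
  assumes T: "theta E S r a b L1 L2 L3" and x: "x \<in> set L1" "x \<noteq> a" "x \<noteq> b"
    and y: "y \<in> set L2" "y \<noteq> a" "y \<noteq> b" and e: "E x y"
  shows "good (length L1 + length L2 + length L3)"
proof -
  have p1: "pth E S a b L1" and p2: "pth E S a b L2" using thetaD[OF T] by auto
  have i12: "set L1 \<inter> set L2 = {a, b}" using thetaD[OF T] by auto
  have rL: "r \<in> set L1" using thetaD[OF T] by auto
  have xr: "x \<noteq> r"
  proof
    assume "x = r"
    then have "ledge L1 r y" using chord_r[OF T _ ] e y by auto
    then have "y \<in> set L1" using ledge_set by fastforce
    then show False using i12 y by auto
  qed
  obtain p1 s1 where L1: "L1 = p1 @ x # s1" "p1 \<noteq> []" "s1 \<noteq> []"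
    using split_int[OF p1 x] by blast
  obtain p2 s2 where L2: "L2 = p2 @ y # s2" "p2 \<noteq> []" "s2 \<noteq> []"
    using split_int[OF p2 y] by blast
  have "r \<in> set p1 \<or> r \<in> set s1" using rL xr L1 by auto
  then show ?thesis
  proof
    assume "r \<in> set s1"
    then show ?thesis using beta12_core[OF T L1(1) L2(1) L1(2,3) L2(2,3) _ e] by blast
  next
    assume rp: "r \<in> set p1"
    have "good (length (rev L1) + length (rev L2) + length (rev L3))"
      by (rule beta12_core[OF theta_rev[OF T], of "rev s1" x "rev p1" "rev s2" y "rev p2"])
         (use L1 L2 rp e in auto)
    then show ?thesis by simp
  qed
qed

lemma reduce:
  assumes T: "theta E S r a b L1 L2 L3" and u: "u \<in> set L1 \<union> set L2 \<union> set L3"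
    and v: "v \<in> set L1 \<union> set L2 \<union> set L3" and e: "E u v"
    and n1: "\<not> ledge L1 u v" and n2: "\<not> ledge L2 u v" and n3: "\<not> ledge L3 u v"
  shows "good (length L1 + length L2 + length L3)"
proof -
  have p1: "pth E S a b L1" and p2: "pth E S a b L2" and p3: "pth E S a b L3" using thetaD[OF T] by auto
  have i: "set L1 \<inter> set L2 = {a, b}" "set L1 \<inter> set L3 = {a, b}" "set L2 \<inter> set L3 = {a, b}"
    using thetaD[OF T] by auto
  have ab: "a \<in> set L1" "b \<in> set L1" "a \<in> set L2" "b \<in> set L2" "a \<in> set L3" "b \<in> set L3"
    using pth_ends[OF p1] pth_ends[OF p2] pth_ends[OF p3] by auto
  have uv: "u \<noteq> v" using e irr by auto
  have e': "E v u" using sym e .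
  have n1': "\<not> ledge L1 v u" "\<not> ledge L2 v u" "\<not> ledge L3 v u" using n1 n2 n3 ledge_sym by metis+
  have T': "theta E S r a b L1 L3 L2" using theta_swap[OF T] .
  have sw: "good (length L1 + length L3 + length L2) \<Longrightarrow> good (length L1 + length L2 + length L3)"
    by (simp add: ac_simps)
  show ?thesis
  proof (cases "u \<in> set L1 \<and> v \<in> set L1")
    case True
    obtain ps ms ss where ms: "ms \<noteq> []" and L: "L1 = ps @ u # ms @ v # ss \<or> L1 = ps @ v # ms @ u # ss"
      using two_split[OF pthD(2)[OF p1] _ _ uv n1] True by blast
    then show ?thesis using alpha1[OF T _ ms e n2 n3] alpha1[OF T _ ms e' n1'(2,3)] by blast
  next
    case c1: False
    show ?thesis
    proof (cases "u \<in> set L2 \<and> v \<in> set L2")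
      case True
      obtain ps ms ss where ms: "ms \<noteq> []" and L: "L2 = ps @ u # ms @ v # ss \<or> L2 = ps @ v # ms @ u # ss"
        using two_split[OF pthD(2)[OF p2] _ _ uv n2] True by blast
      then show ?thesis using alpha2[OF T _ ms e n3] alpha2[OF T _ ms e' n1'(3)] by blast
    next
      case c2: False
      show ?thesis
      proof (cases "u \<in> set L3 \<and> v \<in> set L3")
        case True
        obtain ps ms ss where ms: "ms \<noteq> []" and L: "L3 = ps @ u # ms @ v # ss \<or> L3 = ps @ v # ms @ u # ss"
          using two_split[OF pthD(2)[OF p3] _ _ uv n3] True by blast
        then show ?thesis using alpha2[OF T' _ ms e n2] alpha2[OF T' _ ms e' n1'(2)] sw by blast
      next
        case c3: False
        have una: "u \<noteq> a" "u \<noteq> b" "v \<noteq> a" "v \<noteq> b" using c1 c2 c3 u v ab by auto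
        consider (a12) "u \<in> set L1" "v \<in> set L2" | (a21) "u \<in> set L2" "v \<in> set L1"
          | (a13) "u \<in> set L1" "v \<in> set L3" | (a31) "u \<in> set L3" "v \<in> set L1"
          | (a23) "u \<in> set L2" "v \<in> set L3" | (a32) "u \<in> set L3" "v \<in> set L2"
          using u v c1 c2 c3 by blast
        then show ?thesis
        proof cases
          case a12 then show ?thesis using beta12[OF T _ _ _ _ _ _ e] una by blast
        next
          case a21 then show ?thesis using beta12[OF T _ _ _ _ _ _ e'] una by blast
        next
          case a13 then show ?thesis using beta12[OF T' _ _ _ _ _ _ e] una sw by blast
        next
          case a31 then show ?thesis using beta12[OF T' _ _ _ _ _ _ e'] una sw by blast
        next
          case a23 then show ?thesis using beta23[OF T _ _ _ _ _ _ e] una by blast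
        next
          case a32 then show ?thesis using beta23[OF T _ _ _ _ _ _ e'] una by blast
        qed
      qed
    qed
  qed
qed

lemma base:
  assumes T: "theta E S r a b L1 L2 L3"
    and nc: "\<forall>u\<in>set L1 \<union> set L2 \<union> set L3. \<forall>v\<in>set L1 \<union> set L2 \<union> set L3.
              E u v \<longrightarrow> ledge L1 u v \<or> ledge L2 u v \<or> ledge L3 u v"
  shows "has_induced_subdiv_diamond E S"
proof -
  have p1: "pth E S a b L1" and p2: "pth E S a b L2" and p3: "pth E S a b L3" and ab: "a \<noteq> b"
    using thetaD[OF T] by auto
  let ?W = "set L1 \<union> set L2 \<union> set L3"
  have l1: "length L1 \<noteq> 2"
  proof
    assume "length L1 = 2"
    then have "L1 = [a, b]" using pth_len2[OF p1] by blast
    then show False using thetaD(9-11)[OF T] by auto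
  qed
  have l23: "\<not>(length L2 = 2 \<and> length L3 = 2)" using thetaD(8)[OF T] by auto
  have F: "\<forall>u\<in>?W. \<forall>v\<in>?W. E u v \<longleftrightarrow> ledge L1 u v \<or> ledge L2 u v \<or> ledge L3 u v"
  proof (intro ballI iffI)
    fix u v assume "u \<in> ?W" "v \<in> ?W" "E u v"
    then show "ledge L1 u v \<or> ledge L2 u v \<or> ledge L3 u v" using nc by blast
  next
    fix u v assume "ledge L1 u v \<or> ledge L2 u v \<or> ledge L3 u v"
    then show "E u v" using wlk_ledge pthD(3)[OF p1] pthD(3)[OF p2] pthD(3)[OF p3] sym by metis
  qed
  have "athet ?W E a b L1 L2 L3"
    unfolding athet_def
    using ab pthD[OF p1] pthD[OF p2] pthD[OF p3] pth_len[OF p1 ab] pth_len[OF p2 ab] pth_len[OF p3 ab]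
      thetaD(5-7)[OF T] l1 l23 F by blast
  then have "isub ?W E" by (rule athet_isub)
  moreover have "?W \<subseteq> S" using pthD(6)[OF p1] pthD(6)[OF p2] pthD(6)[OF p3] by auto
  ultimately show ?thesis using has_diamond_of_isub by blast
qed

lemma theta_diamond: "theta E S r a b L1 L2 L3 \<Longrightarrow> has_induced_subdiv_diamond E S"
proof (induction "length L1 + length L2 + length L3" arbitrary: a b L1 L2 L3 rule: less_induct)
  case less
  show ?case
  proof (cases "\<forall>u\<in>set L1 \<union> set L2 \<union> set L3. \<forall>v\<in>set L1 \<union> set L2 \<union> set L3.
              E u v \<longrightarrow> ledge L1 u v \<or> ledge L2 u v \<or> ledge L3 u v")
    case True
    then show ?thesis using base[OF less.prems] by blast
  next
    case False
    then obtain u v where uv: "u \<in> set L1 \<union> set L2 \<union> set L3" "v \<in> set L1 \<union> set L2 \<union> set L3"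
      "E u v" "\<not> ledge L1 u v" "\<not> ledge L2 u v" "\<not> ledge L3 u v" by blast
    have "good (length L1 + length L2 + length L3)" using reduce[OF less.prems uv] .
    then show ?thesis unfolding good_def using less.hyps by blast
  qed
qed

end


lemma wlk_mono: "(\<And>x y. F x y \<Longrightarrow> G x y) \<Longrightarrow> wlk F P \<Longrightarrow> wlk G P"
  by (induction P) (auto simp: wlk_Cons)

lemma wlk_set: "(\<And>x y. F x y \<Longrightarrow> x \<in> X \<and> y \<in> X) \<Longrightarrow> wlk F P \<Longrightarrow> P \<noteq> [] \<Longrightarrow> hd P \<in> X \<Longrightarrow> set P \<subseteq> X"
proof (induction P)
  case Nil then show ?case by simp
next
  case (Cons x xs)
  show ?case
  proof (cases xs)
    case Nil then show ?thesis using Cons by simp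
  next
    case (Cons y ys)
    have "F x y" "wlk F xs" using Cons.prems(2) \<open>xs = y # ys\<close> by auto
    then have "hd xs \<in> X" using Cons.prems(1) \<open>xs = y # ys\<close> by auto
    then have "set xs \<subseteq> X" using Cons.IH Cons.prems \<open>wlk F xs\<close> \<open>xs = y # ys\<close> by auto
    then show ?thesis using Cons.prems by auto
  qed
qed

definition cyc :: "('a \<Rightarrow> 'a \<Rightarrow> bool) \<Rightarrow> 'a list \<Rightarrow> bool" where
  "cyc E C \<longleftrightarrow> C \<noteq> [] \<and> wlk E C \<and> E (last C) (hd C)"

lemma cyc_rotate:
  assumes "cyc E (c1 @ a # t)"
  shows "cyc E (a # t @ c1)"
proof (cases "c1 = []")
  case True then show ?thesis using assms by simp
next
  case False
  have w: "wlk E c1" "wlk E (a # t)" "E (last c1) a" using assms False unfolding cyc_def by auto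
  have cl: "E (last (a # t)) (hd c1)" using assms False unfolding cyc_def by (simp add: hd_append)
  have "wlk E ((a # t) @ c1)" by (subst wlk_append) (use w cl False in auto)
  moreover have "E (last ((a # t) @ c1)) a" using w False by simp
  ultimately show ?thesis unfolding cyc_def by simp
qed

lemma cyc_arcs0:
  assumes sym: "\<And>x y. E x y \<Longrightarrow> E y x"
    and c: "cyc E (a # m @ b # s)" and d: "distinct (a # m @ b # s)"
  shows "\<exists>L2 L3. wlk E L2 \<and> wlk E L3 \<and> distinct L2 \<and> distinct L3 \<and> L2 \<noteq> [] \<and> L3 \<noteq> [] \<and>
     hd L2 = a \<and> hd L3 = a \<and> last L2 = b \<and> last L3 = b \<and> set L2 \<inter> set L3 = {a, b} \<and>
     set L2 \<union> set L3 = set (a # m @ b # s) \<and> length L2 + length L3 = length (a # m @ b # s) + 2"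
proof -
  have w: "wlk E (a # m @ [b])" "wlk E (b # s)" using c unfolding cyc_def
    using wlk_split[of E "a # m" b s] by auto
  have cl: "E (last (b # s)) a" using c unfolding cyc_def by simp
  define L3 where "L3 = a # rev (b # s)"
  have h: "E a (hd (rev (b # s)))" using cl sym by (cases "s = []") (auto simp: hd_rev)
  have "wlk E (rev (b # s))" using w(2) wlk_rev[of E "b # s"] sym by blast
  then have "wlk E L3" unfolding L3_def using h by (simp only: wlk_Cons) simp
  moreover have "distinct L3" "distinct (a # m @ [b])" using d unfolding L3_def by auto
  ultimately show ?thesis using w(1) d unfolding L3_def
    by (intro exI[of _ "a # m @ [b]"] exI[of _ L3]) (auto simp: L3_def)
qed

lemma cycle_arcs:
  assumes sym: "\<And>x y. E x y \<Longrightarrow> E y x"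
    and c: "cyc E C" and d: "distinct C" and ab: "a \<in> set C" "b \<in> set C" "a \<noteq> b"
  shows "\<exists>L2 L3. wlk E L2 \<and> wlk E L3 \<and> distinct L2 \<and> distinct L3 \<and> L2 \<noteq> [] \<and> L3 \<noteq> [] \<and>
     hd L2 = a \<and> hd L3 = a \<and> last L2 = b \<and> last L3 = b \<and> set L2 \<inter> set L3 = {a, b} \<and>
     set L2 \<union> set L3 = set C \<and> length L2 + length L3 = length C + 2"
proof -
  obtain c1 t where C: "C = c1 @ a # t" using ab(1) by (meson split_list)
  have c2: "cyc E (a # t @ c1)" using cyc_rotate[of E c1 a t] c C by blast
  have d2: "distinct (a # t @ c1)" using d C by auto
  have "b \<in> set (t @ c1)" using ab C by auto
  then obtain m s where ts: "t @ c1 = m @ b # s" by (meson split_list)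
  have "\<exists>L2 L3. wlk E L2 \<and> wlk E L3 \<and> distinct L2 \<and> distinct L3 \<and> L2 \<noteq> [] \<and> L3 \<noteq> [] \<and>
     hd L2 = a \<and> hd L3 = a \<and> last L2 = b \<and> last L3 = b \<and> set L2 \<inter> set L3 = {a, b} \<and>
     set L2 \<union> set L3 = set (a # m @ b # s) \<and> length L2 + length L3 = length (a # m @ b # s) + 2"
    using cyc_arcs0[of E a m b s, OF sym] c2 d2 unfolding ts by blast
  moreover have "set (a # m @ b # s) = set C" "length (a # m @ b # s) = length C"
    using C ts by (auto simp flip: ts)
  ultimately show ?thesis by metis
qed


lemma main_ij:
  fixes V :: "'a set" and E :: "'a \<Rightarrow> 'a \<Rightarrow> bool"
    and qs :: "'a list" and VH :: "'a set" and EH :: "'a \<Rightarrow> 'a \<Rightarrow> bool"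
    and v1 v2 :: 'a and C P1 P2 :: "'a list" and i j :: nat
  assumes G: "sgraph V E"
    and Q: "set qs \<subseteq> V" "induced_path E qs"
    and H: "tutte_bridge V E (set qs) VH EH"
    and att: "VH \<inter> set qs = {v1, v2}" "v1 \<noteq> v2" "\<not> E v1 v2"
    and cyc: "is_cycle EH C"
    and P1: "is_path EH P1" "hd P1 = v1" "set P1 \<inter> set C = {last P1}"
    and P2: "is_path EH P2" "hd P2 = v2" "set P2 \<inter> set C = {last P2}"
    and disj: "set P1 \<inter> set P2 = {}"
    and idx: "i < length qs" "j < length qs" "qs ! i = v1" "qs ! j = v2"
    and ij: "i < j"
  shows "has_induced_subdiv_diamond E (VH \<union> {qs ! k | k. i \<le> k \<and> k \<le> j})"
proof -
  define A where "A = set qs"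
  define R where "R = map ((!) qs) [i..<Suc j]"
  define S where "S = VH \<union> set R"
  have SS: "VH \<union> {qs ! k | k. i \<le> k \<and> k \<le> j} = S"
    unfolding S_def R_def by (auto simp: image_iff less_Suc_eq_le)
  have sym: "\<And>x y. E x y \<Longrightarrow> E y x" and irr: "\<And>x. \<not> E x x" and EV: "\<And>x y. E x y \<Longrightarrow> x \<in> V \<and> y \<in> V"
    using G unfolding sgraph_def by blast+
  obtain K where comp: "component (V - A) (induced_adj E (V - A)) K"
    and VH: "VH = K \<union> {a \<in> A. \<exists>k\<in>K. E a k}" and EH: "EH = (\<lambda>x y. E x y \<and> (x \<in> K \<or> y \<in> K))"
    using H unfolding tutte_bridge_def A_def by blast
  have KV: "K \<subseteq> V - A" using comp unfolding component_def by blast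
  have Kcl: "\<And>x y. x \<in> K \<Longrightarrow> y \<in> V - A \<Longrightarrow> E x y \<Longrightarrow> y \<in> K"
  proof -
    fix x y assume "x \<in> K" "y \<in> V - A" "E x y"
    then have "induced_adj E (V - A) x y" using KV unfolding induced_adj_def by auto
    then show "y \<in> K" using comp \<open>x \<in> K\<close> \<open>y \<in> V - A\<close> unfolding component_def by blast
  qed
  have EHE: "\<And>x y. EH x y \<Longrightarrow> E x y" unfolding EH by simp
  have oneK: "\<And>x y. x \<in> K \<Longrightarrow> E x y \<Longrightarrow> y \<in> VH"
  proof -
    fix x y assume x: "x \<in> K" and e: "E x y"
    show "y \<in> VH"
    proof (cases "y \<in> A")
      case True then show ?thesis unfolding VH using x sym[OF e] by blast
    next
      case False then show ?thesis unfolding VH using Kcl[OF x _ e] EV[OF e] by blast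
    qed
  qed
  have EHV: "\<And>x y. EH x y \<Longrightarrow> x \<in> VH \<and> y \<in> VH"
  proof -
    fix x y assume "EH x y"
    then have e: "E x y" and k: "x \<in> K \<or> y \<in> K" unfolding EH by auto
    then show "x \<in> VH \<and> y \<in> VH" using oneK[OF _ e] oneK[OF _ sym[OF e]] unfolding VH by blast
  qed
  have attA: "\<And>w. w \<in> A \<Longrightarrow> w \<noteq> v1 \<Longrightarrow> w \<noteq> v2 \<Longrightarrow> w \<notin> VH" using att(1) unfolding A_def by blast
  have VHA: "\<And>w. w \<in> VH \<Longrightarrow> w \<notin> A \<Longrightarrow> w \<in> K" unfolding VH by blast
  have VHAint: "VH \<inter> A = {v1, v2}" using att(1) unfolding A_def by simp
  have ipq: "is_path E qs" and ind: "\<And>a c. a < length qs \<Longrightarrow> c < length qs \<Longrightarrow> E (qs ! a) (qs ! c) \<Longrightarrow> a = Suc c \<or> c = Suc a"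
    using Q(2) unfolding induced_path_def by auto
  have dq: "distinct qs" and eq: "\<And>k. Suc k < length qs \<Longrightarrow> E (qs ! k) (qs ! Suc k)"
    using ipq unfolding is_path_def by auto
  have ij2: "Suc i < j"
  proof (rule ccontr)
    assume "\<not> Suc i < j"
    then have "j = Suc i" using ij by simp
    then show False using eq[of i] idx att(3) by simp
  qed
  have lR: "length R = Suc j - i" unfolding R_def by (simp add: Suc_diff_le)
  have nR: "\<And>k. k < length R \<Longrightarrow> R ! k = qs ! (i + k)" unfolding R_def by (simp del: upt_Suc)
  have sR: "set R \<subseteq> A" unfolding R_def A_def using idx by auto
  have Rne: "R \<noteq> []" unfolding R_def using ij by simp
  have hR: "hd R = v1" unfolding R_def using ij idx by (simp add: hd_map upt_rec)
  have lastR: "last R = v2" unfolding R_def using ij idx by (simp add: last_map)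
  have dR: "distinct R" unfolding R_def using dq idx
    by (auto simp: distinct_map inj_on_def nth_eq_iff_index_eq)
  have wR: "wlk E R" unfolding wlk_nth
  proof (intro allI impI)
    fix k assume "Suc k < length R"
    then have "Suc (i + k) < length qs" using lR idx by simp
    then show "E (R ! k) (R ! Suc k)" using nR \<open>Suc k < length R\<close> eq by simp
  qed
  define r where "r = qs ! Suc i"
  have rR: "r \<in> set R" unfolding r_def R_def using ij2 by auto
  have rv: "r \<noteq> v1" "r \<noteq> v2" unfolding r_def using dq idx ij2 by (auto simp: nth_eq_iff_index_eq)
  have rA: "r \<in> A" using rR sR by auto
  have rVH: "r \<notin> VH" using attA[OF rA rv] .
  have deg1: "\<And>w. w \<in> S \<Longrightarrow> E r w \<Longrightarrow> w = qs ! i \<or> w = qs ! Suc (Suc i)"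
  proof -
    fix w assume wS: "w \<in> S" and e: "E r w"
    show "w = qs ! i \<or> w = qs ! Suc (Suc i)"
    proof (cases "w \<in> A")
      case True
      then obtain k where k: "k < length qs" "w = qs ! k" unfolding A_def by (auto simp: in_set_conv_nth)
      have "Suc i < length qs" using ij2 idx by simp
      then have "Suc i = Suc k \<or> k = Suc (Suc i)" using ind[OF _ k(1)] e k(2) unfolding r_def by blast
      then show ?thesis using k by auto
    next
      case False
      then have "w \<in> VH" using wS sR unfolding S_def by auto
      then have "w \<in> K" using VHA False by blast
      then have "r \<in> VH" unfolding VH using rA e by blast
      then show ?thesis using rVH by blast
    qed
  qed
  interpret gctx E S r
  proof
    show "\<And>x y. E x y \<Longrightarrow> E y x" by (rule sym)
    show "\<And>x. \<not> E x x" by (rule irr)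
    show "\<And>w1 w2 w3. w1 \<in> S \<Longrightarrow> w2 \<in> S \<Longrightarrow> w3 \<in> S \<Longrightarrow> E r w1 \<Longrightarrow> E r w2 \<Longrightarrow> E r w3 \<Longrightarrow>
        w1 = w2 \<or> w1 = w3 \<or> w2 = w3"
      using deg1 by metis
  qed
  have wP1: "wlk EH P1" "P1 \<noteq> []" "distinct P1" and wP2: "wlk EH P2" "P2 \<noteq> []" "distinct P2"
    using P1(1) P2(1) unfolding is_path_iff by auto
  have v12VH: "v1 \<in> VH" "v2 \<in> VH" using att(1) by auto
  have sP1: "set P1 \<subseteq> VH" using wlk_set[OF EHV wP1(1) wP1(2)] P1(2) v12VH by blast
  have sP2: "set P2 \<subseteq> VH" using wlk_set[OF EHV wP2(1) wP2(2)] P2(2) v12VH by blast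
  have cd: "3 \<le> length C" "distinct C" "\<And>k. Suc k < length C \<Longrightarrow> EH (C ! k) (C ! Suc k)" "EH (last C) (hd C)"
    using cyc unfolding is_cycle_def by auto
  have Cne: "C \<noteq> []" using cd(1) by auto
  have wC: "wlk EH C" unfolding wlk_nth using cd(3) by blast
  have sC: "set C \<subseteq> VH" using wlk_set[OF EHV wC Cne] EHV[OF cd(4)] by blast
  have cycE: "cyc E C" unfolding cyc_def using Cne wlk_mono[of EH E, OF EHE wC] EHE[OF cd(4)] by blast
  define a where "a = last P1"
  define b where "b = last P2"
  have aC: "a \<in> set C" "a \<in> set P1" using P1(3) unfolding a_def by auto
  have bC: "b \<in> set C" "b \<in> set P2" using P2(3) unfolding b_def by auto
  have ab: "a \<noteq> b" using aC bC disj by auto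
  obtain L2 L3 where arcs: "wlk E L2" "wlk E L3" "distinct L2" "distinct L3" "L2 \<noteq> []" "L3 \<noteq> []"
     "hd L2 = a" "hd L3 = a" "last L2 = b" "last L3 = b" "set L2 \<inter> set L3 = {a, b}"
     "set L2 \<union> set L3 = set C" "length L2 + length L3 = length C + 2"
    using cycle_arcs[OF sym cycE cd(2) aC(1) bC(1) ab] by blast
  have VHS: "VH \<subseteq> S" unfolding S_def by auto
  have pL2: "pth E S a b L2" unfolding pth_def using arcs sC VHS by blast
  have pL3: "pth E S a b L3" unfolding pth_def using arcs sC VHS by blast
  have pP1: "pth E S v1 a P1" unfolding pth_def a_def using wP1 P1(2) wlk_mono[of EH E, OF EHE wP1(1)] sP1 VHS by blast
  have pP2: "pth E S v2 b P2" unfolding pth_def b_def using wP2 P2(2) wlk_mono[of EH E, OF EHE wP2(1)] sP2 VHS by blast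
  have pR: "pth E S v1 v2 R" unfolding pth_def using Rne dR wR hR lastR unfolding S_def by blast
  have v2P1: "v2 \<notin> set P1" using disj P2(2) wP2(2) by (cases P2) auto
  have v1P2: "v1 \<notin> set P2" using disj P1(2) wP1(2) by (cases P1) auto
  have RVH: "set R \<inter> VH \<subseteq> {v1, v2}" using sR VHAint by blast
  have g1: "set (rev P1) \<inter> set R \<subseteq> {v1}" using RVH sP1 v2P1 by auto
  define G1 where "G1 = glue (rev P1) R"
  have pG1: "pth E S a v2 G1" and sG1: "set G1 = set (rev P1) \<union> set R"
    using pth_glue[OF pth_rev[OF pP1] pR g1] unfolding G1_def by auto
  have g2: "set G1 \<inter> set P2 \<subseteq> {v2}" unfolding sG1 using disj RVH sP2 v1P2 by auto
  define L1 where "L1 = glue G1 P2"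
  have pL1: "pth E S a b L1" and sL1: "set L1 = set P1 \<union> set R \<union> set P2"
    using pth_glue[OF pG1 pP2 g2] sG1 unfolding L1_def by auto
  have L1C: "set L1 \<inter> set C \<subseteq> {a, b}"
  proof -
    have "set P1 \<inter> set C = {a}" "set P2 \<inter> set C = {b}" using P1(3) P2(3) unfolding a_def b_def by auto
    moreover have "set R \<inter> set C \<subseteq> {v1, v2}" using RVH sC by auto
    moreover have "v1 \<in> set C \<Longrightarrow> v1 = a" using P1(2) wP1(2) \<open>set P1 \<inter> set C = {a}\<close> by (cases P1) auto
    moreover have "v2 \<in> set C \<Longrightarrow> v2 = b" using P2(2) wP2(2) \<open>set P2 \<inter> set C = {b}\<close> by (cases P2) auto
    ultimately show ?thesis unfolding sL1 by blast
  qed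
  have abL1: "a \<in> set L1" "b \<in> set L1" using pth_ends[OF pL1] by auto
  have abL2: "a \<in> set L2" "b \<in> set L2" using pth_ends[OF pL2] by auto
  have abL3: "a \<in> set L3" "b \<in> set L3" using pth_ends[OF pL3] by auto
  have "theta E S r a b L1 L2 L3"
  proof (rule thetaI[OF ab pL1 pL2 pL3])
    show "set L1 \<inter> set L2 = {a, b}" using L1C arcs(12) abL1 abL2 by blast
    show "set L1 \<inter> set L3 = {a, b}" using L1C arcs(12) abL1 abL3 by blast
    show "set L2 \<inter> set L3 = {a, b}" using arcs(11) .
    show "5 \<le> length L2 + length L3" using arcs(13) cd(1) by simp
    show "r \<in> set L1" using rR sL1 by simp
    show "r \<noteq> a" "r \<noteq> b" using rVH sC aC bC by auto
  qed
  then have "has_induced_subdiv_diamond E S" by (rule theta_diamond)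
  then show ?thesis using SS by simp
qed


theorem mainTheorem18:
  fixes V :: "'a set" and E :: "'a \<Rightarrow> 'a \<Rightarrow> bool"
    and qs :: "'a list" and VH :: "'a set" and EH :: "'a \<Rightarrow> 'a \<Rightarrow> bool"
    and v1 v2 :: 'a and C P1 P2 :: "'a list" and i j :: nat
  assumes G: "sgraph V E"
    and Q: "set qs \<subseteq> V" "induced_path E qs"
    and H: "tutte_bridge V E (set qs) VH EH"
    and att: "VH \<inter> set qs = {v1, v2}" "v1 \<noteq> v2" "\<not> E v1 v2"
    and cyc: "is_cycle EH C"
    and P1: "is_path EH P1" "hd P1 = v1" "set P1 \<inter> set C = {last P1}"
    and P2: "is_path EH P2" "hd P2 = v2" "set P2 \<inter> set C = {last P2}"
    and disj: "set P1 \<inter> set P2 = {}"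
    and idx: "i < length qs" "j < length qs" "qs ! i = v1" "qs ! j = v2"
  shows "has_induced_subdiv_diamond E
           (VH \<union> {qs ! k | k. min i j \<le> k \<and> k \<le> max i j})"
proof -
  have "i \<noteq> j" using idx att(2) by auto
  then consider "i < j" | "j < i" by linarith
  then show ?thesis
  proof cases
    case 1
    then have "min i j = i" "max i j = j" by auto
    then show ?thesis using main_ij[OF G Q H att cyc P1 P2 disj idx 1] by simp
  next
    case 2
    then have mm: "min i j = j" "max i j = i" by auto
    have att': "VH \<inter> set qs = {v2, v1}" "v2 \<noteq> v1" "\<not> E v2 v1"
      using att G unfolding sgraph_def by (auto simp: insert_commute)
    have disj': "set P2 \<inter> set P1 = {}" using disj by auto
    show ?thesis using main_ij[OF G Q H att' cyc P2 P1 disj' idx(2,1,4,3) 2] mm by simp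
  qed
qed


end
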